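(* For all probability measures $\nu$ on $\mathcal{G}$: (a) $\Gamma^{\nu}$ is a standard extensive game with perfect recall; and (b) if $\nu$ gives positive probability to all games in $\mathcal{G}$, then $\vec{\sigma}$ is a Nash equilibrium of $\Gamma^\nu$ iff $\vec{\sigma}'$ is a generalized Nash equilibrium of $\Gamma^*$, where $\sigma_{i,\Gamma'}(\langle\Gamma^h\rangle\cdot h')=\sigma'_{i,\Gamma'}(\Gamma^h,h')$.
   Context: Let $\Gamma^* = (\mathcal{G}, \Gamma^m, \mathcal{F})$ be a game with awareness based on a finite standard extensive game $\Gamma$ with perfect recall: $\mathcal{G}$ is a countable set of augmented games based on $\Gamma$ (each augmented game is a finite extensive game with perfect recall, with histories $\mathcal{H}'$, player function $P'$, nature's probabilities $f'_c$, information partitions, utilities $u'_i$, and awareness functions), $\Gamma^m \in \mathcal{G}$ is the modeler's game, and $\mathcal{F}$ maps each pair $(\Gamma^+,h)$ with $\Gamma^+\in\mathcal{G}$ and $P^+(h)=i$ to a pair $(\Gamma^h,I)$ with $\Gamma^h\in\mathcal{G}$ and $I$ an $i$-information set of $\Gamma^h$ (the game $i$ believes is being played at $h$, and the histories he considers possible); $\mathcal{F}$ satisfies consistency conditions including a perfect-recall condition: for all $h'\in I$, there is a prefix $h'_1$ of $h'$ with $P^h(h'_1)=i$ and $\mathcal{F}(\Gamma^h,h'_1)=(\Gamma'',I'')$ iff there is a prefix $h_1$ of $h$ with $P^+(h_1)=i$ and $\mathcal{F}(\Gamma^+,h_1)=(\Gamma'',I'')$, and $h'_1\cdot\langle m\rangle$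 is a prefix of $h'$ iff $h_1\cdot\langle m\rangle$ is a prefix of $h$. Let $\mathcal{G}_i$ be the set of games $\Gamma'\in\mathcal{G}$ such that $\mathcal{F}(\Gamma^+,h)=(\Gamma',\cdot)$ for some $\Gamma^+\in\mathcal{G}$ and $h$ with $P^+(h)=i$. Write $(\Gamma_1,h_1)\sim_i(\Gamma_2,h_2)$ if $\mathcal{F}(\Gamma_1,h_1)=\mathcal{F}(\Gamma_2,h_2)$. A local strategy $\sigma_{i,\Gamma'}$ maps each pair $(\Gamma^+,h)$ with $P^+(h)=i$ and $\mathcal{F}(\Gamma^+,h)=(\Gamma',I)$ to a probability distribution over the moves available at histories in $I$, constant on $\sim_i$-classes. A generalized strategy profile is $\vec{\sigma}'=\{\sigma'_{i,\Gamma'}: i\in N, \Gamma'\in\mathcal{G}_i\}$; it is a generalized Nash equilibrium if for every $i$, $\Gamma'\in\mathcal{G}_i$ and local strategy $\sigma$ for $i$ in $\Gamma'$, $EU_{i,\Gamma'}(\vec{\sigma}')\ge EU_{i,\Gamma'}((\vec{\sigma}'_{-(i,\Gamma')},\sigma))$, where $EU_{i,\Gamma'}$ is $i$'s expected payoff in $\Gamma'$. For $\Gamma'\in\mathcal{G}$ let $\lfloor \mathcal{H}'\rfloor$ be the set of $h\in\mathcal{H}'$ such that for every prefix $h_1\cdot\langle m\rangle$ of $h$, if $P'(h_1)=i\in N$ and $\mathcal{F}(\Gamma',h_1)=(\Gamma'',I)$ then $h_2\cdot\langle m\rangle\in\mathcal{H}''$ for all $h_2\in I$. Given a probability measure $\nu$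 on $\mathcal{G}$, $\Gamma^\nu$ is the standard game with: players $N^\nu=\{(i,\Gamma'):\Gamma'\in\mathcal{G}_i\}$; moves $\mathcal{G}$ together with all moves occurring in the $\lfloor\mathcal{H}'\rfloor$; histories $\langle\,\rangle$ and $\langle\Gamma'\rangle\cdot h$ for $\Gamma'\in\mathcal{G}$, $h\in\lfloor\mathcal{H}'\rfloor$; $P^\nu(\langle\,\rangle)=c$, $P^\nu(\langle\Gamma^h\rangle\cdot h')=(i,\Gamma^{h'})$ if $P^h(h')=i\in N$ and $\mathcal{F}(\Gamma^h,h')=(\Gamma^{h'},\cdot)$, and $=c$ if $P^h(h')=c$; $f^\nu_c(\Gamma'\mid\langle\,\rangle)=\nu(\Gamma')$ and $f^\nu_c(\cdot\mid\langle\Gamma^h\rangle\cdot h')=f^h_c(\cdot\mid h')$ when $P^h(h')=c$; the information sets of player $(i,\Gamma')$ are the $\sim_i$-classes restricted to histories where $i$ moves and $\mathcal{F}$ has the form $(\Gamma',\cdot)$; and $u^\nu_{i,\Gamma'}(\langle\Gamma^h\rangle\cdot z)=u^h_i(z)$ if $\Gamma^h=\Gamma'$ and $0$ otherwise. *)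

theory Defs
  imports "HOL-Analysis.Analysis" "HOL-Probability.Probability_Mass_Function" "HOL-Library.Sublist"
begin

text \<open>Histories are finite lists of moves.  plr h = None means that nature (chance, c)
  moves at h; plr h = Some i means player i moves at h.  chance h is nature's
  probability distribution f_c(. | h); infosets i is the information partition of
  player i; util i is player i's payoff on terminal histories.\<close>

record ('i, 'm) egame =
  players  :: "'i set"
  hist     :: "'m list set"
  plr      :: "'m list \<Rightarrow> 'i option"
  chance   :: "'m list \<Rightarrow> 'm \<Rightarrow> real"
  infosets :: "'i \<Rightarrow> 'm list set set"
  util     :: "'i \<Rightarrow> 'm list \<Rightarrow> real"

definition moves :: "('i, 'm, 'x) egame_scheme \<Rightarrow> 'm list \<Rightarrow> 'm set" where
  "moves g h = {m. h @ [m] \<in> hist g}"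

definition terminal :: "('i, 'm, 'x) egame_scheme \<Rightarrow> 'm list \<Rightarrow> bool" where
  "terminal g h \<longleftrightarrow> h \<in> hist g \<and> moves g h = {}"

definition nonterm :: "('i, 'm, 'x) egame_scheme \<Rightarrow> 'm list \<Rightarrow> bool" where
  "nonterm g h \<longleftrightarrow> h \<in> hist g \<and> moves g h \<noteq> {}"

definition dp :: "('i, 'm, 'x) egame_scheme \<Rightarrow> 'i \<Rightarrow> 'm list \<Rightarrow> bool" where
  "dp g i h \<longleftrightarrow> nonterm g h \<and> plr g h = Some i"

definition is_dist :: "'m set \<Rightarrow> ('m \<Rightarrow> real) \<Rightarrow> bool" where
  "is_dist A p \<longleftrightarrow> (\<forall>m. 0 \<le> p m) \<and> (\<forall>m. p m \<noteq> 0 \<longrightarrow> m \<in> A) \<and> (p has_sum 1) A"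

definition std_game :: "('i, 'm, 'x) egame_scheme \<Rightarrow> bool" where
  "std_game g \<longleftrightarrow>
     [] \<in> hist g
   \<and> (\<forall>h m. h @ [m] \<in> hist g \<longrightarrow> h \<in> hist g)
   \<and> \<not> (\<exists>p :: nat \<Rightarrow> 'm. \<forall>n. map p [0..<n] \<in> hist g)
   \<and> (\<forall>h. nonterm g h \<longrightarrow>
          (case plr g h of None \<Rightarrow> is_dist (moves g h) (chance g h)
                         | Some i \<Rightarrow> i \<in> players g))
   \<and> (\<forall>i \<in> players g.
          (\<forall>I \<in> infosets g i. I \<noteq> {})
        \<and> \<Union> (infosets g i) = {h. dp g i h}
        \<and> (\<forall>I \<in> infosets g i. \<forall>J \<in> infosets g i. I \<noteq> J \<longrightarrow> I \<inter> J = {})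
        \<and> (\<forall>I \<in> infosets g i. \<forall>h \<in> I. \<forall>h' \<in> I. moves g h = moves g h'))"

definition is_infoset :: "('i, 'm, 'x) egame_scheme \<Rightarrow> 'i \<Rightarrow> 'm list set \<Rightarrow> bool" where
  "is_infoset g i I \<longleftrightarrow> i \<in> players g \<and> I \<in> infosets g i"

definition info_of :: "('i, 'm, 'x) egame_scheme \<Rightarrow> 'i \<Rightarrow> 'm list \<Rightarrow> 'm list set" where
  "info_of g i h = (THE I. I \<in> infosets g i \<and> h \<in> I)"

definition experience :: "('i, 'm, 'x) egame_scheme \<Rightarrow> 'i \<Rightarrow> 'm list \<Rightarrow> ('m list set \<times> 'm) list" where
  "experience g i h =
     map (\<lambda>k. (info_of g i (take k h), h ! k))
         (filter (\<lambda>k. plr g (take k h) = Some i) [0..<length h])"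

definition perfect_recall :: "('i, 'm, 'x) egame_scheme \<Rightarrow> bool" where
  "perfect_recall g \<longleftrightarrow>
     (\<forall>i \<in> players g. \<forall>I \<in> infosets g i. \<forall>h \<in> I. \<forall>h' \<in> I.
        experience g i h = experience g i h')"

definition behavioral :: "('i, 'm, 'x) egame_scheme \<Rightarrow> 'i \<Rightarrow> ('m list \<Rightarrow> 'm \<Rightarrow> real) \<Rightarrow> bool" where
  "behavioral g i s \<longleftrightarrow>
     (\<forall>h. dp g i h \<longrightarrow> is_dist (moves g h) (s h))
   \<and> (\<forall>I \<in> infosets g i. \<forall>h \<in> I. \<forall>h' \<in> I. s h = s h')"

definition profile :: "('i, 'm, 'x) egame_scheme \<Rightarrow> ('i \<Rightarrow> 'm list \<Rightarrow> 'm \<Rightarrow> real) \<Rightarrow> bool" where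
  "profile g \<sigma> \<longleftrightarrow> (\<forall>i \<in> players g. behavioral g i (\<sigma> i))"

definition reach :: "('i, 'm, 'x) egame_scheme \<Rightarrow> ('i \<Rightarrow> 'm list \<Rightarrow> 'm \<Rightarrow> real) \<Rightarrow> 'm list \<Rightarrow> real" where
  "reach g \<sigma> h = (\<Prod>k<length h.
      (case plr g (take k h) of None \<Rightarrow> chance g (take k h) (h ! k)
                              | Some i \<Rightarrow> \<sigma> i (take k h) (h ! k)))"

definition EU :: "('i, 'm, 'x) egame_scheme \<Rightarrow> ('i \<Rightarrow> 'm list \<Rightarrow> 'm \<Rightarrow> real) \<Rightarrow> 'i \<Rightarrow> real" where
  "EU g \<sigma> i = (\<Sum>\<^sub>\<infinity>z \<in> {z. terminal g z}. reach g \<sigma> z * util g i z)"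

definition nash :: "('i, 'm, 'x) egame_scheme \<Rightarrow> ('i \<Rightarrow> 'm list \<Rightarrow> 'm \<Rightarrow> real) \<Rightarrow> bool" where
  "nash g \<sigma> \<longleftrightarrow> profile g \<sigma> \<and>
     (\<forall>i \<in> players g. \<forall>s. behavioral g i s \<longrightarrow> EU g (\<sigma>(i := s)) i \<le> EU g \<sigma> i)"

type_synonym ('i, 'm) awF = "('i, 'm) egame \<Rightarrow> 'm list \<Rightarrow> ('i, 'm) egame \<times> 'm list set"

text \<open>Augmented game based on the underlying game (awareness functions omitted).\<close>
definition aug_game :: "('i, 'm) egame \<Rightarrow> ('i, 'm) egame \<Rightarrow> bool" where
  "aug_game \<Gamma> g \<longleftrightarrow> std_game g \<and> finite (hist g) \<and> perfect_recall g \<and> players g \<subseteq> players \<Gamma>"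

definition awareness_game ::
  "('i, 'm) egame \<Rightarrow> ('i, 'm) egame set \<Rightarrow> ('i, 'm) egame \<Rightarrow> ('i, 'm) awF \<Rightarrow> bool" where
  "awareness_game \<Gamma> G Gm F \<longleftrightarrow>
     std_game \<Gamma> \<and> finite (hist \<Gamma>) \<and> perfect_recall \<Gamma>
   \<and> countable G \<and> Gm \<in> G \<and> (\<forall>g \<in> G. aug_game \<Gamma> g)
   \<and> (\<forall>gp \<in> G. \<forall>i h. dp gp i h \<longrightarrow>
        (let gh = fst (F gp h); I = snd (F gp h) in
           gh \<in> G \<and> is_infoset gh i I
         \<comment> \<open>moves player i considers possible are actually available\<close>
         \<and> (\<forall>h' \<in> I. moves gh h' \<subseteq> moves gp h)
         \<comment> \<open>perfect recall condition on F\<close>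
         \<and> (\<forall>h' \<in> I.
              (\<forall>g'' I''.
                 (\<exists>h1'. prefix h1' h' \<and> dp gh i h1' \<and> F gh h1' = (g'', I''))
                 \<longleftrightarrow> (\<exists>h1. prefix h1 h \<and> dp gp i h1 \<and> F gp h1 = (g'', I'')))
            \<and> (\<forall>h1' h1 g'' I'' m.
                 prefix h1' h' \<and> dp gh i h1' \<and> F gh h1' = (g'', I'')
               \<and> prefix h1 h \<and> dp gp i h1 \<and> F gp h1 = (g'', I'')
               \<longrightarrow> (prefix (h1' @ [m]) h' \<longleftrightarrow> prefix (h1 @ [m]) h)))))"

definition Gi :: "('i, 'm) egame set \<Rightarrow> ('i, 'm) awF \<Rightarrow> 'i \<Rightarrow> ('i, 'm) egame set" where
  "Gi G F i = {g'. \<exists>gp \<in> G. \<exists>h. dp gp i h \<and> fst (F gp h) = g'}"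

definition local_strategy ::
  "('i, 'm) egame set \<Rightarrow> ('i, 'm) awF \<Rightarrow> 'i \<Rightarrow> ('i, 'm) egame
     \<Rightarrow> (('i, 'm) egame \<Rightarrow> 'm list \<Rightarrow> 'm \<Rightarrow> real) \<Rightarrow> bool" where
  "local_strategy G F i g' s \<longleftrightarrow>
     (\<forall>gp \<in> G. \<forall>h. dp gp i h \<and> fst (F gp h) = g' \<longrightarrow>
        is_dist {m. \<forall>h2 \<in> snd (F gp h). h2 @ [m] \<in> hist g'} (s gp h))
   \<and> (\<forall>g1 \<in> G. \<forall>g2 \<in> G. \<forall>h1 h2.
        dp g1 i h1 \<and> dp g2 i h2 \<and> fst (F g1 h1) = g' \<and> F g1 h1 = F g2 h2
        \<longrightarrow> s g1 h1 = s g2 h2)"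

type_synonym ('i, 'm) gprofile = "'i \<Rightarrow> ('i, 'm) egame \<Rightarrow> ('i, 'm) egame \<Rightarrow> 'm list \<Rightarrow> 'm \<Rightarrow> real"

definition gen_profile ::
  "('i, 'm) egame \<Rightarrow> ('i, 'm) egame set \<Rightarrow> ('i, 'm) awF \<Rightarrow> ('i, 'm) gprofile \<Rightarrow> bool" where
  "gen_profile \<Gamma> G F \<sigma>' \<longleftrightarrow>
     (\<forall>i \<in> players \<Gamma>. \<forall>g' \<in> Gi G F i. local_strategy G F i g' (\<sigma>' i g'))"

definition greach :: "('i, 'm) awF \<Rightarrow> ('i, 'm) egame \<Rightarrow> ('i, 'm) gprofile \<Rightarrow> 'm list \<Rightarrow> real" where
  "greach F g' \<sigma>' h = (\<Prod>k<length h.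
      (case plr g' (take k h) of None \<Rightarrow> chance g' (take k h) (h ! k)
         | Some j \<Rightarrow> \<sigma>' j (fst (F g' (take k h))) g' (take k h) (h ! k)))"

definition GEU :: "('i, 'm) awF \<Rightarrow> ('i, 'm) egame \<Rightarrow> ('i, 'm) gprofile \<Rightarrow> 'i \<Rightarrow> real" where
  "GEU F g' \<sigma>' i = (\<Sum>z \<in> {z. terminal g' z}. greach F g' \<sigma>' z * util g' i z)"

definition gen_nash ::
  "('i, 'm) egame \<Rightarrow> ('i, 'm) egame set \<Rightarrow> ('i, 'm) awF \<Rightarrow> ('i, 'm) gprofile \<Rightarrow> bool" where
  "gen_nash \<Gamma> G F \<sigma>' \<longleftrightarrow> gen_profile \<Gamma> G F \<sigma>' \<and>
     (\<forall>i \<in> players \<Gamma>. \<forall>g' \<in> Gi G F i. \<forall>s. local_strategy G F i g' s \<longrightarrow>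
        GEU F g' (\<sigma>'(i := (\<sigma>' i)(g' := s))) i \<le> GEU F g' \<sigma>' i)"

definition floor_hist :: "('i, 'm) awF \<Rightarrow> ('i, 'm) egame \<Rightarrow> 'm list set" where
  "floor_hist F g' = {h \<in> hist g'. \<forall>h1 m. prefix (h1 @ [m]) h \<longrightarrow>
      (\<forall>i. plr g' h1 = Some i \<longrightarrow>
         (\<forall>h2 \<in> snd (F g' h1). h2 @ [m] \<in> hist (fst (F g' h1))))}"

type_synonym ('i, 'm) numove = "('i, 'm) egame + 'm"

text \<open>Histories of \<Gamma>^\<nu> are <> and Inl \<Gamma>' # map Inr h; decoding the tail:\<close>
definition dec :: "('i, 'm) numove list \<Rightarrow> 'm list" where
  "dec xs = map projr xs"

definition nu_class ::
  "('i, 'm) egame set \<Rightarrow> ('i, 'm) awF \<Rightarrow> 'i \<Rightarrow> ('i, 'm) egame \<times> 'm list set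
     \<Rightarrow> ('i, 'm) numove list set" where
  "nu_class G F i v = {Inl g2 # map Inr h2 | g2 h2.
      g2 \<in> G \<and> h2 \<in> floor_hist F g2 \<and> dp g2 i h2 \<and> F g2 h2 = v}"

definition nu_game ::
  "('i, 'm) egame \<Rightarrow> ('i, 'm) egame set \<Rightarrow> ('i, 'm) awF \<Rightarrow> ('i, 'm) egame pmf
     \<Rightarrow> ('i \<times> ('i, 'm) egame, ('i, 'm) numove) egame" where
  "nu_game \<Gamma> G F \<nu> =
    \<lparr> players = {(i, g'). i \<in> players \<Gamma> \<and> g' \<in> Gi G F i},
      hist = {[]} \<union> {Inl g' # map Inr h | g' h. g' \<in> G \<and> h \<in> floor_hist F g'},
      plr = (\<lambda>hh. case hh of [] \<Rightarrow> None
               | x # rest \<Rightarrow> (case x of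
                   Inl gh \<Rightarrow> (case plr gh (dec rest) of None \<Rightarrow> None
                               | Some i \<Rightarrow> Some (i, fst (F gh (dec rest))))
                 | Inr _ \<Rightarrow> None)),
      chance = (\<lambda>hh mv. case hh of
                 [] \<Rightarrow> (case mv of Inl g' \<Rightarrow> pmf \<nu> g' | Inr _ \<Rightarrow> 0)
               | x # rest \<Rightarrow> (case x of
                   Inl gh \<Rightarrow> (case mv of Inr m \<Rightarrow> chance gh (dec rest) m | Inl _ \<Rightarrow> 0)
                 | Inr _ \<Rightarrow> 0)),
      infosets = (\<lambda>(i, g'). {nu_class G F i (F g1 h1) | g1 h1.
                    g1 \<in> G \<and> h1 \<in> floor_hist F g1 \<and> dp g1 i h1 \<and> fst (F g1 h1) = g'}),
      util = (\<lambda>(i, g') hh. case hh of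
                 x # rest \<Rightarrow> (case x of Inl gh \<Rightarrow> (if gh = g' then util gh i (dec rest) else 0)
                                     | Inr _ \<Rightarrow> 0)
               | [] \<Rightarrow> 0) \<rparr>"

definition corresponds ::
  "('i, 'm) egame set \<Rightarrow> ('i, 'm) awF
     \<Rightarrow> ('i \<times> ('i, 'm) egame \<Rightarrow> ('i, 'm) numove list \<Rightarrow> ('i, 'm) numove \<Rightarrow> real)
     \<Rightarrow> ('i, 'm) gprofile \<Rightarrow> bool" where
  "corresponds G F \<sigma> \<sigma>' \<longleftrightarrow>
     (\<forall>i g' gh h'. gh \<in> G \<and> h' \<in> floor_hist F gh \<and> dp gh i h' \<and> fst (F gh h') = g'
        \<longrightarrow> \<sigma> (i, g') (Inl gh # map Inr h')
              = (\<lambda>mv. case mv of Inr m \<Rightarrow> \<sigma>' i g' gh h' m | Inl _ \<Rightarrow> 0))"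

end

theory Submission
  imports Defs
begin

lemma hist_prefix_closed:
  assumes "std_game g" "b \<in> hist g" "prefix a b"
  shows "a \<in> hist g"
  using assms(2,3)
proof (induction b arbitrary: a rule: rev_induct)
  case Nil then show ?case using assms(1) by (auto simp: std_game_def)
next
  case (snoc x xs)
  from snoc.prems(2) have "a = xs @ [x] \<or> prefix a xs" by (simp add: prefix_snoc)
  moreover have "xs \<in> hist g" using snoc.prems(1) assms(1) by (auto simp: std_game_def)
  ultimately show ?case using snoc by auto
qed

lemma aw_basic:
  assumes "awareness_game \<Gamma> G Gm F" "g \<in> G"
  shows "std_game g" "finite (hist g)" "perfect_recall g" "players g \<subseteq> players \<Gamma>"
proof -
  have "\<forall>g \<in> G. aug_game \<Gamma> g" using assms(1) unfolding awareness_game_def by (elim conjE)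
  then have "aug_game \<Gamma> g" using assms(2) by blast
  then show "std_game g" "finite (hist g)" "perfect_recall g" "players g \<subseteq> players \<Gamma>"
    unfolding aug_game_def by auto
qed

lemma aw_top:
  assumes "awareness_game \<Gamma> G Gm F"
  shows "countable G" "Gm \<in> G"
proof -
  show "countable G" using assms unfolding awareness_game_def by (elim conjE)
  show "Gm \<in> G" using assms unfolding awareness_game_def by (elim conjE)
qed

lemma aw_F:
  assumes "awareness_game \<Gamma> G Gm F" "gp \<in> G" "dp gp i h"
  shows "fst (F gp h) \<in> G" "is_infoset (fst (F gp h)) i (snd (F gp h))"
    "\<And>h'. h' \<in> snd (F gp h) \<Longrightarrow> moves (fst (F gp h)) h' \<subseteq> moves gp h"
    "\<And>h' g'' I''. h' \<in> snd (F gp h) \<Longrightarrow>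
       (\<exists>h1'. prefix h1' h' \<and> dp (fst (F gp h)) i h1' \<and> F (fst (F gp h)) h1' = (g'', I''))
       \<longleftrightarrow> (\<exists>h1. prefix h1 h \<and> dp gp i h1 \<and> F gp h1 = (g'', I''))"
    "\<And>h' h1' h1 g'' I'' m. h' \<in> snd (F gp h) \<Longrightarrow>
         prefix h1' h' \<Longrightarrow> dp (fst (F gp h)) i h1' \<Longrightarrow> F (fst (F gp h)) h1' = (g'', I'')
       \<Longrightarrow> prefix h1 h \<Longrightarrow> dp gp i h1 \<Longrightarrow> F gp h1 = (g'', I'')
       \<Longrightarrow> (prefix (h1' @ [m]) h' \<longleftrightarrow> prefix (h1 @ [m]) h)"
proof -
  have A: "fst (F gp h) \<in> G \<and> is_infoset (fst (F gp h)) i (snd (F gp h))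
         \<and> (\<forall>h' \<in> snd (F gp h). moves (fst (F gp h)) h' \<subseteq> moves gp h)
         \<and> (\<forall>h' \<in> snd (F gp h).
              (\<forall>g'' I''.
                 (\<exists>h1'. prefix h1' h' \<and> dp (fst (F gp h)) i h1' \<and> F (fst (F gp h)) h1' = (g'', I''))
                 \<longleftrightarrow> (\<exists>h1. prefix h1 h \<and> dp gp i h1 \<and> F gp h1 = (g'', I'')))
            \<and> (\<forall>h1' h1 g'' I'' m.
                 prefix h1' h' \<and> dp (fst (F gp h)) i h1' \<and> F (fst (F gp h)) h1' = (g'', I'')
               \<and> prefix h1 h \<and> dp gp i h1 \<and> F gp h1 = (g'', I'')
               \<longrightarrow> (prefix (h1' @ [m]) h' \<longleftrightarrow> prefix (h1 @ [m]) h)))"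
  proof -
    have X: "\<forall>gp \<in> G. \<forall>i h. dp gp i h \<longrightarrow>
        (let gh = fst (F gp h); I = snd (F gp h) in
           gh \<in> G \<and> is_infoset gh i I
         \<and> (\<forall>h' \<in> I. moves gh h' \<subseteq> moves gp h)
         \<and> (\<forall>h' \<in> I.
              (\<forall>g'' I''.
                 (\<exists>h1'. prefix h1' h' \<and> dp gh i h1' \<and> F gh h1' = (g'', I''))
                 \<longleftrightarrow> (\<exists>h1. prefix h1 h \<and> dp gp i h1 \<and> F gp h1 = (g'', I'')))
            \<and> (\<forall>h1' h1 g'' I'' m.
                 prefix h1' h' \<and> dp gh i h1' \<and> F gh h1' = (g'', I'')
               \<and> prefix h1 h \<and> dp gp i h1 \<and> F gp h1 = (g'', I'')
               \<longrightarrow> (prefix (h1' @ [m]) h' \<longleftrightarrow> prefix (h1 @ [m]) h))))"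
      using assms(1) unfolding awareness_game_def by (elim conjE)
    show ?thesis using X[rule_format, OF assms(2,3)] unfolding Let_def .
  qed
  show "fst (F gp h) \<in> G" "is_infoset (fst (F gp h)) i (snd (F gp h))" using A by auto
  show "\<And>h'. h' \<in> snd (F gp h) \<Longrightarrow> moves (fst (F gp h)) h' \<subseteq> moves gp h" using A by auto
  have A4: "\<forall>h' \<in> snd (F gp h).
              (\<forall>g'' I''.
                 (\<exists>h1'. prefix h1' h' \<and> dp (fst (F gp h)) i h1' \<and> F (fst (F gp h)) h1' = (g'', I''))
                 \<longleftrightarrow> (\<exists>h1. prefix h1 h \<and> dp gp i h1 \<and> F gp h1 = (g'', I'')))
            \<and> (\<forall>h1' h1 g'' I'' m.
                 prefix h1' h' \<and> dp (fst (F gp h)) i h1' \<and> F (fst (F gp h)) h1' = (g'', I'')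
               \<and> prefix h1 h \<and> dp gp i h1 \<and> F gp h1 = (g'', I'')
               \<longrightarrow> (prefix (h1' @ [m]) h' \<longleftrightarrow> prefix (h1 @ [m]) h))"
    using A by (elim conjE)
  show "\<And>h' g'' I''. h' \<in> snd (F gp h) \<Longrightarrow>
       (\<exists>h1'. prefix h1' h' \<and> dp (fst (F gp h)) i h1' \<and> F (fst (F gp h)) h1' = (g'', I''))
       \<longleftrightarrow> (\<exists>h1. prefix h1 h \<and> dp gp i h1 \<and> F gp h1 = (g'', I''))"
    using A4 by (simp only: Ball_def)
  show "\<And>h' h1' h1 g'' I'' m. h' \<in> snd (F gp h) \<Longrightarrow>
         prefix h1' h' \<Longrightarrow> dp (fst (F gp h)) i h1' \<Longrightarrow> F (fst (F gp h)) h1' = (g'', I'')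
       \<Longrightarrow> prefix h1 h \<Longrightarrow> dp gp i h1 \<Longrightarrow> F gp h1 = (g'', I'')
       \<Longrightarrow> (prefix (h1' @ [m]) h' \<longleftrightarrow> prefix (h1 @ [m]) h)"
  proof -
    fix h' h1' h1 g'' I'' m
    assume "h' \<in> snd (F gp h)" "prefix h1' h'" "dp (fst (F gp h)) i h1'" "F (fst (F gp h)) h1' = (g'', I'')"
       "prefix h1 h" "dp gp i h1" "F gp h1 = (g'', I'')"
    then show "(prefix (h1' @ [m]) h' \<longleftrightarrow> prefix (h1 @ [m]) h)"
      using A4 by (simp only: Ball_def)
  qed
qed

lemma infoset_props:
  assumes "std_game g" "is_infoset g i I"
  shows "I \<noteq> {}" "\<And>h. h \<in> I \<Longrightarrow> dp g i h" "\<And>h h'. h \<in> I \<Longrightarrow> h' \<in> I \<Longrightarrow> moves g h = moves g h'"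
proof -
  have A: "(\<forall>I \<in> infosets g i. I \<noteq> {})
        \<and> \<Union> (infosets g i) = {h. dp g i h}
        \<and> (\<forall>I \<in> infosets g i. \<forall>h \<in> I. \<forall>h' \<in> I. moves g h = moves g h')"
    using assms unfolding std_game_def is_infoset_def by (elim conjE) (drule bspec, assumption, elim conjE, intro conjI, assumption+)
  have I: "I \<in> infosets g i" using assms(2) by (simp add: is_infoset_def)
  show "I \<noteq> {}" using A I by blast
  show "\<And>h. h \<in> I \<Longrightarrow> dp g i h" using A I by blast
  show "\<And>h h'. h \<in> I \<Longrightarrow> h' \<in> I \<Longrightarrow> moves g h = moves g h'" using A I by blast
qed

lemma dp_moves_ne: "dp g i h \<Longrightarrow> moves g h \<noteq> {}"
  by (simp add: dp_def nonterm_def)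

lemma prefix_take_eq: "prefix p h \<Longrightarrow> p = take (length p) h"
  by (auto simp: prefix_def)

lemma take_snoc_prefix: "k < length h \<Longrightarrow> prefix (take k h @ [h ! k]) h"
  by (metis take_Suc_conv_app_nth take_is_prefix)

lemma strict_prefix_dp:
  assumes "std_game g" "h \<in> hist g" "prefix p h" "p \<noteq> h" "plr g p = Some i"
  shows "dp g i p"
proof -
  have l: "length p < length h" using assms(3,4)
    by (metis prefix_length_prefix prefix_order.antisym prefix_length_le le_neq_implies_less prefix_take_eq take_all)
  have p: "p = take (length p) h" using assms(3) by (rule prefix_take_eq)
  have "prefix (p @ [h ! length p]) h" using take_snoc_prefix[OF l] p by simp
  then have "p @ [h ! length p] \<in> hist g" using hist_prefix_closed[OF assms(1,2)] by blast
  then have "p \<in> hist g" "moves g p \<noteq> {}" using hist_prefix_closed[OF assms(1)] by (auto simp: moves_def)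
  then show ?thesis using assms(5) by (simp add: dp_def nonterm_def)
qed

definition Vals :: "('i, 'm) awF \<Rightarrow> ('i, 'm) egame \<Rightarrow> 'i \<Rightarrow> 'm list \<Rightarrow> (('i, 'm) egame \<times> 'm list set) set" where
  "Vals F g i h = {F g p | p. prefix p h \<and> dp g i p}"

lemma snoc_prefix_nth: "prefix (p @ [m]) h \<Longrightarrow> h ! length p = m"
  by (auto simp: prefix_def nth_append)

lemma dp_hist: "dp g i h \<Longrightarrow> h \<in> hist g"
  by (simp add: dp_def nonterm_def)

lemma pmf_has_sum_1:
  assumes "set_pmf p \<subseteq> A"
  shows "(pmf p has_sum 1) A"
proof -
  have a: "pmf p abs_summable_on A" by (rule pmf_abs_summable)
  have s: "pmf p summable_on A"
    using abs_summable_summable abs_summable_equivalent a by blast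
  have "infsum (pmf p) A = 1" using infsetsum_infsum[OF a] infsetsum_pmf_eq_1[OF assms] by simp
  then show ?thesis using has_sum_infsum[OF s] by simp
qed

lemma is_dist_reindex:
  assumes "is_dist A p" "inj f" "\<And>x. q (f x) = p x" "\<And>y. y \<notin> range f \<Longrightarrow> q y = 0"
  shows "is_dist (f ` A) q"
proof -
  have "\<forall>m. 0 \<le> q m" using assms unfolding is_dist_def by (metis order_refl rangeE)
  moreover have "\<forall>m. q m \<noteq> 0 \<longrightarrow> m \<in> f ` A" using assms unfolding is_dist_def by (metis image_eqI rangeE)
  moreover have "(q has_sum 1) (f ` A)"
    using has_sum_reindex[of f A q 1] assms(1,2,3) unfolding is_dist_def by (simp add: comp_def inj_on_def)
  ultimately show ?thesis unfolding is_dist_def by blast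
qed

lemma floor_hist_sub: "h \<in> floor_hist F g \<Longrightarrow> h \<in> hist g"
  by (simp add: floor_hist_def)

lemma floor_prefix:
  assumes "std_game g" "h \<in> floor_hist F g" "prefix p h"
  shows "p \<in> floor_hist F g"
proof -
  have "p \<in> hist g" using hist_prefix_closed[OF assms(1) floor_hist_sub[OF assms(2)] assms(3)] .
  moreover have "\<forall>h1 m. prefix (h1 @ [m]) p \<longrightarrow>
      (\<forall>i. plr g h1 = Some i \<longrightarrow> (\<forall>h2 \<in> snd (F g h1). h2 @ [m] \<in> hist (fst (F g h1))))"
  proof (rule allI, rule allI, rule impI)
    fix h1 m assume "prefix (h1 @ [m]) p"
    then have "prefix (h1 @ [m]) h" using assms(3) by (rule prefix_order.trans)
    then show "\<forall>i. plr g h1 = Some i \<longrightarrow> (\<forall>h2 \<in> snd (F g h1). h2 @ [m] \<in> hist (fst (F g h1)))"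
      using assms(2) unfolding floor_hist_def by blast
  qed
  ultimately show ?thesis unfolding floor_hist_def by blast
qed

lemma floor_nil: "[] \<in> hist g \<Longrightarrow> [] \<in> floor_hist F g"
  by (simp add: floor_hist_def)

lemma floor_snoc:
  assumes "h \<in> floor_hist F g"
  shows "h @ [m] \<in> floor_hist F g \<longleftrightarrow> h @ [m] \<in> hist g \<and>
     (\<forall>i. plr g h = Some i \<longrightarrow> (\<forall>h2 \<in> snd (F g h). h2 @ [m] \<in> hist (fst (F g h))))"
    (is "_ \<longleftrightarrow> _ \<and> ?C h m")
proof
  assume L: "h @ [m] \<in> floor_hist F g"
  then show "h @ [m] \<in> hist g \<and> ?C h m" unfolding floor_hist_def by blast
next
  assume R: "h @ [m] \<in> hist g \<and> ?C h m"
  have "?C h1 m'" if "prefix (h1 @ [m']) (h @ [m])" for h1 m'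
  proof -
    from that have "h1 @ [m'] = h @ [m] \<or> prefix (h1 @ [m']) h" by (simp only: prefix_snoc)
    then show ?thesis
    proof
      assume "h1 @ [m'] = h @ [m]"
      then have "h1 = h" "m' = m" by simp_all
      then show ?thesis using R by simp
    next
      assume "prefix (h1 @ [m']) h"
      then show ?thesis using assms unfolding floor_hist_def by blast
    qed
  qed
  then show "h @ [m] \<in> floor_hist F g" using R unfolding floor_hist_def by blast
qed

lemma dec_map[simp]: "dec (map Inr h) = h"
  by (simp add: dec_def comp_def)

lemma Inl_map_eq:
  assumes "Inl g # map Inr h = Inl g' # map Inr h'"
  shows "g = g' \<and> h = h'"
proof -
  have 1: "g = g'" and 2: "map Inr h = map Inr h'" using assms by simp_all
  have "inj Inr" by (rule inj_Inr)
  then have "h = h'" using 2 inj_map_eq_map by metis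
  then show ?thesis using 1 by simp
qed

lemma nu_hist: "hist (nu_game \<Gamma> G F \<nu>) = {[]} \<union> {Inl g' # map Inr h | g' h. g' \<in> G \<and> h \<in> floor_hist F g'}"
  by (simp add: nu_game_def)

lemma nu_hist_Inl: "Inl g # map Inr h \<in> hist (nu_game \<Gamma> G F \<nu>) \<longleftrightarrow> g \<in> G \<and> h \<in> floor_hist F g"
  by (auto simp: nu_hist)

lemma nu_hist_cases:
  assumes "hh \<in> hist (nu_game \<Gamma> G F \<nu>)"
  obtains "hh = []" | g h where "hh = Inl g # map Inr h" "g \<in> G" "h \<in> floor_hist F g"
  using assms by (auto simp: nu_hist)

lemma nu_plr_nil[simp]: "plr (nu_game \<Gamma> G F \<nu>) [] = None"
  by (simp add: nu_game_def)

lemma nu_plr: "plr (nu_game \<Gamma> G F \<nu>) (Inl g # map Inr h) =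
   (case plr g h of None \<Rightarrow> None | Some i \<Rightarrow> Some (i, fst (F g h)))"
  by (simp add: nu_game_def cong: option.case_cong)

lemma nu_chance_nil: "chance (nu_game \<Gamma> G F \<nu>) [] = (\<lambda>mv. case mv of Inl g' \<Rightarrow> pmf \<nu> g' | Inr _ \<Rightarrow> 0)"
  by (simp add: nu_game_def)

lemma nu_chance: "chance (nu_game \<Gamma> G F \<nu>) (Inl g # map Inr h) =
   (\<lambda>mv. case mv of Inr m \<Rightarrow> chance g h m | Inl _ \<Rightarrow> 0)"
  by (simp add: nu_game_def cong: sum.case_cong)

lemma nu_players: "players (nu_game \<Gamma> G F \<nu>) = {(i, g'). i \<in> players \<Gamma> \<and> g' \<in> Gi G F i}"
  by (simp add: nu_game_def)

lemma nu_infosets: "infosets (nu_game \<Gamma> G F \<nu>) (i, g') = {nu_class G F i (F g1 h1) | g1 h1.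
                    g1 \<in> G \<and> h1 \<in> floor_hist F g1 \<and> dp g1 i h1 \<and> fst (F g1 h1) = g'}"
  by (simp add: nu_game_def)

lemma nu_util: "util (nu_game \<Gamma> G F \<nu>) (i, g') (Inl g # map Inr h) = (if g = g' then util g i h else 0)"
  by (simp add: nu_game_def)

lemma nu_util_nil: "util (nu_game \<Gamma> G F \<nu>) (i, g') [] = 0"
  by (simp add: nu_game_def)

lemma nu_class_mem: "x \<in> nu_class G F i v \<longleftrightarrow>
   (\<exists>g h. x = Inl g # map Inr h \<and> g \<in> G \<and> h \<in> floor_hist F g \<and> dp g i h \<and> F g h = v)"
  by (auto simp: nu_class_def)

lemma nu_moves_nil:
  assumes "\<And>g. g \<in> G \<Longrightarrow> [] \<in> hist g"
  shows "moves (nu_game \<Gamma> G F \<nu>) [] = Inl ` G"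
  using assms floor_nil by (auto simp: moves_def nu_hist)

lemma nu_moves:
  "moves (nu_game \<Gamma> G F \<nu>) (Inl g # map Inr h) = Inr ` {m. g \<in> G \<and> h @ [m] \<in> floor_hist F g}"
proof (rule set_eqI)
  fix mv
  show "mv \<in> moves (nu_game \<Gamma> G F \<nu>) (Inl g # map Inr h) \<longleftrightarrow> mv \<in> Inr ` {m. g \<in> G \<and> h @ [m] \<in> floor_hist F g}"
  proof (cases mv)
    case (Inl x)
    have "\<And>h'. map Inr h @ [Inl x] \<noteq> map Inr h'"
      by (metis (no_types, lifting) Inl_Inr_False ex_map_conv in_set_conv_decomp)
    then show ?thesis using Inl by (auto simp: moves_def nu_hist)
  next
    case (Inr m)
    have "Inl g # map Inr h @ [Inr m] = Inl g # map Inr (h @ [m])" by simp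
    then show ?thesis using Inr nu_hist_Inl[of g "h @ [m]" \<Gamma> G F \<nu>] by (auto simp: moves_def)
  qed
qed

lemma is_dist_Inr_back:
  assumes "is_dist (Inr ` A) q"
  shows "is_dist A (\<lambda>m. q (Inr m))"
proof -
  have "(q has_sum 1) (Inr ` A)" using assms unfolding is_dist_def by blast
  then have "((q \<circ> Inr) has_sum 1) A" using has_sum_reindex[of Inr A q 1] by (simp add: inj_on_def)
  then show ?thesis using assms unfolding is_dist_def comp_def by blast
qed

definition Sq :: "('i, 'm) awF \<Rightarrow> ('i, 'm) egame \<Rightarrow> 'i \<Rightarrow> 'm list \<Rightarrow> ((('i, 'm) egame \<times> 'm list set) \<times> 'm) list" where
  "Sq F g i h = map (\<lambda>k. (F g (take k h), h ! k)) (filter (\<lambda>k. plr g (take k h) = Some i) [0..<length h])"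

lemma Sq_none:
  assumes "\<And>k. k < length h \<Longrightarrow> plr g (take k h) \<noteq> Some i"
  shows "Sq F g i h = []"
  using assms unfolding Sq_def by (auto simp: filter_empty_conv)

lemma Sq_last:
  assumes "k < length h" "plr g (take k h) = Some i"
    "\<And>k'. k < k' \<Longrightarrow> k' < length h \<Longrightarrow> plr g (take k' h) \<noteq> Some i"
  shows "Sq F g i h = Sq F g i (take k h) @ [(F g (take k h), h ! k)]"
proof -
  have u: "[0..<length h] = [0..<k] @ [k] @ [Suc k..<length h]"
  proof -
    have "[0..<length h] = [0..<k] @ [k..<length h]" using assms(1) upt_add_eq_append[of 0 k "length h - k"] by simp
    also have "[k..<length h] = k # [Suc k..<length h]" using assms(1) by (simp add: upt_conv_Cons)
    finally show ?thesis by simp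
  qed
  have f3: "filter (\<lambda>k. plr g (take k h) = Some i) [Suc k..<length h] = []"
    using assms(3) by (auto simp: filter_empty_conv)
  have f1: "map (\<lambda>k. (F g (take k h), h ! k)) (filter (\<lambda>k. plr g (take k h) = Some i) [0..<k])
     = map (\<lambda>ka. (F g (take ka (take k h)), take k h ! ka)) (filter (\<lambda>ka. plr g (take ka (take k h)) = Some i) [0..<k])"
  proof -
    have "filter (\<lambda>k'. plr g (take k' h) = Some i) [0..<k] = filter (\<lambda>ka. plr g (take ka (take k h)) = Some i) [0..<k]"
      by (rule filter_cong) simp_all
    moreover have "\<And>ka. ka \<in> set (filter (\<lambda>ka. plr g (take ka (take k h)) = Some i) [0..<k]) \<Longrightarrow>
        (F g (take ka h), h ! ka) = (F g (take ka (take k h)), take k h ! ka)"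
      by simp
    ultimately show ?thesis by simp
  qed
  have lk: "length (take k h) = k" using assms(1) by simp
  show ?thesis unfolding Sq_def u lk using f1 f3 assms(2) by simp
qed

lemma Vals_memD: "x \<in> Vals F g i h \<Longrightarrow> \<exists>p. prefix p h \<and> dp g i p \<and> F g p = x"
  unfolding Vals_def by auto

definition Al :: "('i, 'm) awF \<Rightarrow> ('i, 'm) egame \<Rightarrow> 'm list \<Rightarrow> 'm set" where
  "Al F g h = {m. \<forall>h2 \<in> snd (F g h). h2 @ [m] \<in> hist (fst (F g h))}"

context
  fixes \<Gamma> G Gm and F :: "('i, 'm) awF"
  assumes aw: "awareness_game \<Gamma> G Gm F"
begin

lemma VS:
  assumes "gp \<in> G" "dp gp i h" "h' \<in> snd (F gp h)"
  shows "Vals F (fst (F gp h)) i h' = Vals F gp i h"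
proof (rule set_eqI)
  fix v :: "('i, 'm) egame \<times> 'm list set"
  obtain g'' I'' where v: "v = (g'', I'')" by (cases v)
  have E: "(\<exists>h1'. prefix h1' h' \<and> dp (fst (F gp h)) i h1' \<and> F (fst (F gp h)) h1' = v)
       \<longleftrightarrow> (\<exists>h1. prefix h1 h \<and> dp gp i h1 \<and> F gp h1 = v)"
    using aw_F(4)[OF aw assms, of g'' I''] unfolding v .
  show "v \<in> Vals F (fst (F gp h)) i h' \<longleftrightarrow> v \<in> Vals F gp i h"
    unfolding Vals_def mem_Collect_eq using E by metis
qed

lemma snd_ne:
  assumes "gp \<in> G" "dp gp i h"
  shows "snd (F gp h) \<noteq> {}"
  using infoset_props(1)[OF aw_basic(1)[OF aw aw_F(1)[OF aw assms]] aw_F(2)[OF aw assms]] .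

lemma Vcommon:
  assumes "g1 \<in> G" "dp g1 i h1" "g2 \<in> G" "dp g2 i h2" "F g1 h1 = F g2 h2"
  shows "Vals F g1 i h1 = Vals F g2 i h2"
proof -
  obtain h' where h': "h' \<in> snd (F g1 h1)" using snd_ne[OF assms(1,2)] by blast
  have "Vals F (fst (F g1 h1)) i h' = Vals F g1 i h1" using VS[OF assms(1,2) h'] .
  moreover have "Vals F (fst (F g2 h2)) i h' = Vals F g2 i h2" using VS[OF assms(3,4)] h' assms(5) by simp
  ultimately show ?thesis using assms(5) by simp
qed

lemma Uniq_strict:
  assumes "gp \<in> G" "prefix p1 p2" "p1 \<noteq> p2" "dp gp i p1" "dp gp i p2" "F gp p1 = F gp p2"
  shows False
proof -
  have l: "length p1 < length p2" using assms(2,3)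
    by (metis le_neq_implies_less prefix_length_le prefix_take_eq take_all)
  define m where "m = p2 ! length p1"
  have pm: "prefix (p1 @ [m]) p2" unfolding m_def using take_snoc_prefix[OF l] prefix_take_eq[OF assms(2)] by simp
  obtain g'' I'' where v: "F gp p2 = (g'', I'')" by (cases "F gp p2")
  obtain h'' where h'': "h'' \<in> snd (F gp p2)" using snd_ne[OF assms(1,5)] by blast
  have "\<exists>h1. prefix h1 p2 \<and> dp gp i h1 \<and> F gp h1 = (g'', I'')" using assms(5) v by blast
  then obtain h1' where h1': "prefix h1' h''" "dp (fst (F gp p2)) i h1'" "F (fst (F gp p2)) h1' = (g'', I'')"
    using aw_F(4)[OF aw assms(1,5) h''] by blast
  have "prefix (h1' @ [m]) h'' \<longleftrightarrow> prefix (p2 @ [m]) p2"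
    using aw_F(5)[OF aw assms(1,5) h'' h1' prefix_order.refl assms(5) v] .
  moreover have "prefix (h1' @ [m]) h'' \<longleftrightarrow> prefix (p1 @ [m]) p2"
    using aw_F(5)[OF aw assms(1,5) h'' h1' assms(2,4)] assms(6) v by simp
  ultimately show False using pm by (simp add: prefix_def)
qed

lemma Uniq:
  assumes "gp \<in> G" "prefix p1 h" "prefix p2 h" "dp gp i p1" "dp gp i p2" "F gp p1 = F gp p2"
  shows "p1 = p2"
  using prefix_same_cases[OF assms(2,3)] Uniq_strict[OF assms(1) _ _ assms(4,5,6)]
    Uniq_strict[OF assms(1) _ _ assms(5,4) assms(6)[symmetric]] by blast

lemma NextMove:
  assumes "g1 \<in> G" "dp g1 i h1" "g2 \<in> G" "dp g2 i h2" "F g1 h1 = F g2 h2"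
    "prefix q1 h1" "dp g1 i q1" "prefix q2 h2" "dp g2 i q2" "F g1 q1 = F g2 q2"
  shows "prefix (q1 @ [m]) h1 \<longleftrightarrow> prefix (q2 @ [m]) h2"
proof -
  obtain h' where h': "h' \<in> snd (F g1 h1)" using snd_ne[OF assms(1,2)] by blast
  obtain g'' I'' where v: "F g1 q1 = (g'', I'')" by (cases "F g1 q1")
  have "\<exists>hh. prefix hh h1 \<and> dp g1 i hh \<and> F g1 hh = (g'', I'')" using assms(6,7) v by blast
  then obtain p' where p': "prefix p' h'" "dp (fst (F g1 h1)) i p'" "F (fst (F g1 h1)) p' = (g'', I'')"
    using aw_F(4)[OF aw assms(1,2) h'] by blast
  have h'2: "h' \<in> snd (F g2 h2)" using h' assms(5) by simp
  have "prefix (p' @ [m]) h' \<longleftrightarrow> prefix (q1 @ [m]) h1"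
    using aw_F(5)[OF aw assms(1,2) h' p' assms(6,7)] v by simp
  moreover have "prefix (p' @ [m]) h' \<longleftrightarrow> prefix (q2 @ [m]) h2"
    using aw_F(5)[OF aw assms(3,4) h'2 p'(1) p'(2,3)[unfolded assms(5)] assms(8,9)] assms(10) v by simp
  ultimately show ?thesis by simp
qed

lemma Sq_eq:
  assumes "g1 \<in> G" "dp g1 i h1" "g2 \<in> G" "dp g2 i h2" "F g1 h1 = F g2 h2"
  shows "Sq F g1 i h1 = Sq F g2 i h2"
  using assms
proof (induction "length (Sq F g1 i h1)" arbitrary: g1 h1 g2 h2 rule: less_induct)
  case less
  have std1: "std_game g1" using aw_basic(1)[OF aw less.prems(1)] .
  have std2: "std_game g2" using aw_basic(1)[OF aw less.prems(3)] .
  have hist1: "h1 \<in> hist g1" using dp_hist[OF less.prems(2)] .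
  have hist2: "h2 \<in> hist g2" using dp_hist[OF less.prems(4)] .
  have V: "Vals F g1 i h1 = Vals F g2 i h2" using Vcommon[OF less.prems] .
  define K1 where "K1 = {k. k < length h1 \<and> plr g1 (take k h1) = Some i}"
  have inK1: "length p \<in> K1" if "prefix p h1" "p \<noteq> h1" "dp g1 i p" for p
  proof -
    have "p = take (length p) h1" using prefix_take_eq[OF that(1)] .
    moreover have "length p \<le> length h1" using prefix_length_le[OF that(1)] .
    ultimately have "length p < length h1" using that(2) by (metis le_neq_implies_less take_all)
    then show ?thesis unfolding K1_def using that(3) \<open>p = take (length p) h1\<close> by (auto simp: dp_def)
  qed
  show ?case
  proof (cases "K1 = {}")
    case True
    have S1: "Sq F g1 i h1 = []" by (rule Sq_none) (use True in \<open>auto simp: K1_def\<close>)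
    have "Sq F g2 i h2 = []"
    proof (rule Sq_none)
      fix k assume k: "k < length h2"
      show "plr g2 (take k h2) \<noteq> Some i"
      proof
        assume pk: "plr g2 (take k h2) = Some i"
        have q: "prefix (take k h2) h2" "take k h2 \<noteq> h2" using k by (auto simp: take_is_prefix)
        have dq: "dp g2 i (take k h2)" using strict_prefix_dp[OF std2 hist2 q pk] .
        have "F g2 (take k h2) \<in> Vals F g2 i h2" unfolding Vals_def using q dq by blast
        then obtain p where p: "prefix p h1" "dp g1 i p" "F g1 p = F g2 (take k h2)"
          using V Vals_memD[of _ F g1 i h1] by (metis (no_types, lifting))
        show False
        proof (cases "p = h1")
          case True
          then have "F g2 (take k h2) = F g2 h2" using p less.prems(5) by simp
          then have "take k h2 = h2" using Uniq[OF less.prems(3) q(1) prefix_order.refl dq less.prems(4)] by blast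
          with q(2) show False by simp
        next
          case False
          then show False using inK1[OF p(1) False p(2)] True by simp
        qed
      qed
    qed
    then show ?thesis using S1 by simp
  next
    case False
    have fin: "finite K1" unfolding K1_def by simp
    define k1 where "k1 = Max K1"
    have k1K: "k1 \<in> K1" using Max_in[OF fin False] k1_def by simp
    have k1max: "\<And>k. k \<in> K1 \<Longrightarrow> k \<le> k1" using Max_ge[OF fin] k1_def by simp
    have k1l: "k1 < length h1" and pk1: "plr g1 (take k1 h1) = Some i" using k1K by (auto simp: K1_def)
    define q1 where "q1 = take k1 h1"
    have q1p: "prefix q1 h1" "q1 \<noteq> h1" using k1l by (auto simp: q1_def take_is_prefix)
    have dq1: "dp g1 i q1" using strict_prefix_dp[OF std1 hist1 q1p] pk1 q1_def by simp
    have "F g1 q1 \<in> Vals F g1 i h1" unfolding Vals_def using q1p dq1 by blast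
    then obtain q2 where q2: "prefix q2 h2" "dp g2 i q2" "F g2 q2 = F g1 q1"
      using V Vals_memD[of _ F g2 i h2] by (metis (no_types, lifting))
    have q2ne: "q2 \<noteq> h2"
    proof
      assume "q2 = h2"
      then have "F g1 q1 = F g1 h1" using q2(3) less.prems(5) by simp
      then have "q1 = h1" using Uniq[OF less.prems(1) q1p(1) prefix_order.refl dq1 less.prems(2)] by blast
      with q1p(2) show False by simp
    qed
    define k2 where "k2 = length q2"
    have q2t: "q2 = take k2 h2" using prefix_take_eq[OF q2(1)] k2_def by simp
    have k2l: "k2 < length h2" using q2ne q2t prefix_length_le[OF q2(1)] k2_def
      by (metis le_neq_implies_less take_all)
    have lq1: "length q1 = k1" using k1l q1_def by simp
    have "prefix (q1 @ [h1 ! k1]) h1" using take_snoc_prefix[OF k1l] q1_def by simp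
    then have "prefix (q2 @ [h1 ! k1]) h2"
      using NextMove[OF less.prems q1p(1) dq1 q2(1,2) q2(3)[symmetric]] by simp
    then have mv: "h2 ! k2 = h1 ! k1" using snoc_prefix_nth k2_def by metis
    have max2: "plr g2 (take k' h2) \<noteq> Some i" if "k2 < k'" "k' < length h2" for k'
    proof
      assume pk: "plr g2 (take k' h2) = Some i"
      define r where "r = take k' h2"
      have rp: "prefix r h2" "r \<noteq> h2" using that(2) by (auto simp: r_def take_is_prefix)
      have dr: "dp g2 i r" using strict_prefix_dp[OF std2 hist2 rp] pk r_def by simp
      have "F g2 r \<in> Vals F g2 i h2" unfolding Vals_def using rp dr by blast
      then obtain r1 where r1: "prefix r1 h1" "dp g1 i r1" "F g1 r1 = F g2 r"
        using V Vals_memD[of _ F g1 i h1] by (metis (no_types, lifting))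
      have r1ne: "r1 \<noteq> h1"
      proof
        assume "r1 = h1"
        then have "F g2 r = F g2 h2" using r1(3) less.prems(5) by simp
        then have "r = h2" using Uniq[OF less.prems(3) rp(1) prefix_order.refl dr less.prems(4)] by blast
        with rp(2) show False by simp
      qed
      have lr1: "length r1 \<le> k1" using k1max[OF inK1[OF r1(1) r1ne r1(2)]] .
      have Vr: "Vals F g2 i r = Vals F g1 i r1" using Vcommon[OF less.prems(3) dr less.prems(1) r1(2) r1(3)[symmetric]] .
      have "length q2 \<le> length r" using that k2_def r_def by simp
      then have q2r: "prefix q2 r" using prefix_length_prefix[OF q2(1) rp(1)] by simp
      have "F g2 q2 \<in> Vals F g2 i r" unfolding Vals_def using q2r q2(2) by blast
      then obtain s where s: "prefix s r1" "dp g1 i s" "F g1 s = F g2 q2"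
        using Vr Vals_memD[of _ F g1 i r1] by (metis (no_types, lifting))
      have "prefix s h1" using s(1) r1(1) by (rule prefix_order.trans)
      then have "s = q1" using Uniq[OF less.prems(1) _ q1p(1) s(2) dq1] s(3) q2(3) by simp
      then have "prefix q1 r1" using s(1) by simp
      then have "length r1 = k1" using lr1 prefix_length_le lq1 by fastforce
      then have "r1 = q1" using prefix_take_eq[OF r1(1)] q1_def by simp
      then have "F g2 r = F g2 q2" using r1(3) q2(3) by simp
      then have "q2 = r" using Uniq[OF less.prems(3) q2(1) rp(1) q2(2) dr] by simp
      then show False using that(1) k2_def r_def that(2) by simp
    qed
    have S1: "Sq F g1 i h1 = Sq F g1 i q1 @ [(F g1 q1, h1 ! k1)]"
      unfolding q1_def
    proof (rule Sq_last[OF k1l pk1])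
      fix k' assume "k1 < k'" "k' < length h1"
      then show "plr g1 (take k' h1) \<noteq> Some i" using k1max[of k'] unfolding K1_def by auto
    qed
    have S2: "Sq F g2 i h2 = Sq F g2 i q2 @ [(F g2 q2, h2 ! k2)]"
      unfolding q2t using Sq_last[OF k2l _ max2] q2(2) q2t by (simp add: dp_def)
    have "length (Sq F g1 i q1) < length (Sq F g1 i h1)" using S1 by simp
    then have "Sq F g1 i q1 = Sq F g2 i q2"
      using less.hyps[OF _ less.prems(1) dq1 less.prems(3) q2(2) q2(3)[symmetric]] by simp
    then show ?thesis using S1 S2 mv q2(3) by simp
  qed
qed

lemma AL:
  assumes "g \<in> G" "dp g i h" "h' \<in> snd (F g h)"
  shows "Al F g h = moves (fst (F g h)) h'"
proof -
  have std: "std_game (fst (F g h))" using aw_basic(1)[OF aw aw_F(1)[OF aw assms(1,2)]] .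
  note isI = aw_F(2)[OF aw assms(1,2)]
  show ?thesis
  proof (rule set_eqI)
    fix m
    show "m \<in> Al F g h \<longleftrightarrow> m \<in> moves (fst (F g h)) h'"
    proof
      assume "m \<in> Al F g h" then show "m \<in> moves (fst (F g h)) h'"
        using assms(3) unfolding Al_def moves_def by blast
    next
      assume m: "m \<in> moves (fst (F g h)) h'"
      have "h2 @ [m] \<in> hist (fst (F g h))" if "h2 \<in> snd (F g h)" for h2
        using m infoset_props(3)[OF std isI that assms(3)] unfolding moves_def by blast
      then show "m \<in> Al F g h" unfolding Al_def by blast
    qed
  qed
qed

lemma Al_ne:
  assumes "g \<in> G" "dp g i h"
  shows "Al F g h \<noteq> {}"
proof -
  obtain h' where h': "h' \<in> snd (F g h)" using snd_ne[OF assms] by blast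
  have std: "std_game (fst (F g h))" using aw_basic(1)[OF aw aw_F(1)[OF aw assms]] .
  have "dp (fst (F g h)) i h'" using infoset_props(2)[OF std aw_F(2)[OF aw assms] h'] .
  then show ?thesis using AL[OF assms h'] dp_moves_ne by simp
qed

lemma Al_sub:
  assumes "g \<in> G" "dp g i h"
  shows "Al F g h \<subseteq> moves g h"
proof -
  obtain h' where h': "h' \<in> snd (F g h)" using snd_ne[OF assms] by blast
  show ?thesis using AL[OF assms h'] aw_F(3)[OF aw assms h'] by simp
qed

lemma floor_moves_dp:
  assumes "g \<in> G" "h \<in> floor_hist F g" "dp g i h"
  shows "{m. h @ [m] \<in> floor_hist F g} = Al F g h"
proof -
  have p: "plr g h = Some i" using assms(3) by (simp add: dp_def)
  show ?thesis using floor_snoc[OF assms(2)] Al_sub[OF assms(1,3)] p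
    unfolding Al_def moves_def by auto
qed

lemma floor_moves_chance:
  assumes "h \<in> floor_hist F g" "plr g h = None"
  shows "{m. h @ [m] \<in> floor_hist F g} = moves g h"
  using floor_snoc[OF assms(1)] assms(2) unfolding moves_def by auto

lemma nu_nonterm:
  assumes "g \<in> G" "h \<in> floor_hist F g"
  shows "nonterm (nu_game \<Gamma> G F \<nu>) (Inl g # map Inr h) \<longleftrightarrow> nonterm g h"
proof -
  have hN: "Inl g # map Inr h \<in> hist (nu_game \<Gamma> G F \<nu>)" using assms nu_hist_Inl by blast
  have hg: "h \<in> hist g" using floor_hist_sub[OF assms(2)] .
  have mv: "moves (nu_game \<Gamma> G F \<nu>) (Inl g # map Inr h) = Inr ` {m. h @ [m] \<in> floor_hist F g}"
    using nu_moves[of \<Gamma> G F \<nu> g h] assms(1) by simp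
  show ?thesis
  proof
    assume "nonterm (nu_game \<Gamma> G F \<nu>) (Inl g # map Inr h)"
    then have "{m. h @ [m] \<in> floor_hist F g} \<noteq> {}" using mv unfolding nonterm_def by auto
    then have "moves g h \<noteq> {}" using floor_hist_sub unfolding moves_def by blast
    then show "nonterm g h" using hg unfolding nonterm_def by simp
  next
    assume nt: "nonterm g h"
    have "{m. h @ [m] \<in> floor_hist F g} \<noteq> {}"
    proof (cases "plr g h")
      case None
      then show ?thesis using floor_moves_chance[OF assms(2) None] nt unfolding nonterm_def by simp
    next
      case (Some i)
      then have d: "dp g i h" using nt by (simp add: dp_def)
      then show ?thesis using floor_moves_dp[OF assms d] Al_ne[OF assms(1) \<open>dp g i h\<close>] by simp
    qed
    then show "nonterm (nu_game \<Gamma> G F \<nu>) (Inl g # map Inr h)" using hN mv unfolding nonterm_def by simp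
  qed
qed

lemma nu_dp:
  assumes "g \<in> G" "h \<in> floor_hist F g"
  shows "dp (nu_game \<Gamma> G F \<nu>) (i, g') (Inl g # map Inr h) \<longleftrightarrow> dp g i h \<and> fst (F g h) = g'"
  using nu_nonterm[OF assms] unfolding dp_def nu_plr by (auto split: option.splits)

lemma nu_moves_Al:
  assumes "g \<in> G" "h \<in> floor_hist F g" "dp g i h"
  shows "moves (nu_game \<Gamma> G F \<nu>) (Inl g # map Inr h) = Inr ` Al F g h"
  using nu_moves[of \<Gamma> G F \<nu> g h] floor_moves_dp[OF assms] assms(1) by simp

lemma nu_prefix_closed:
  assumes "hh @ [mv] \<in> hist (nu_game \<Gamma> G F \<nu>)"
  shows "hh \<in> hist (nu_game \<Gamma> G F \<nu>)"
proof (cases hh)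
  case Nil then show ?thesis by (simp add: nu_hist)
next
  case (Cons x xs)
  from assms obtain g h where gh: "hh @ [mv] = Inl g # map Inr h" "g \<in> G" "h \<in> floor_hist F g"
    by (auto simp: nu_hist)
  then have x: "x = Inl g" and xs: "xs @ [mv] = map Inr h" using Cons by simp_all
  then obtain us vs where uv: "h = us @ vs" "xs = map Inr us" using map_eq_append_conv[of Inr h xs "[mv]"] by metis
  have "us \<in> floor_hist F g"
    using floor_prefix[OF aw_basic(1)[OF aw gh(2)] gh(3)] uv(1) by (simp add: prefix_def)
  then show ?thesis using Cons x uv(2) gh(2) nu_hist_Inl by metis
qed

lemma nu_no_inf: "\<not> (\<exists>p. \<forall>n. map p [0..<n] \<in> hist (nu_game \<Gamma> G F \<nu>))"
proof
  assume "\<exists>p. \<forall>n. map p [0..<n] \<in> hist (nu_game \<Gamma> G F \<nu>)"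
  then obtain p where p: "\<And>n. map p [0..<n] \<in> hist (nu_game \<Gamma> G F \<nu>)" by blast
  have "[p 0] \<in> hist (nu_game \<Gamma> G F \<nu>)" using p[of 1] by simp
  then obtain g h where "[p 0] = Inl g # map Inr h" "g \<in> G" by (auto simp: nu_hist)
  then have p0: "p 0 = Inl g" and gG: "g \<in> G" by simp_all
  define M where "M = Max (length ` hist g)"
  have fin: "finite (length ` hist g)" using aw_basic(2)[OF aw gG] by simp
  have "map p [0..<M + 2] \<in> hist (nu_game \<Gamma> G F \<nu>)" using p .
  moreover have "map p [0..<M + 2] \<noteq> []" by simp
  ultimately obtain g' h' where e: "map p [0..<M + 2] = Inl g' # map Inr h'" "h' \<in> floor_hist F g'"
    by (auto simp: nu_hist)
  have "p 0 = hd (map p [0..<M + 2])" by (simp del: upt_Suc add: upt_conv_Cons)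
  then have "p 0 = Inl g'" using e(1) by simp
  then have "g' = g" using p0 by simp
  have "length h' = M + 1" using arg_cong[OF e(1), of length] by simp
  moreover have "length h' \<in> length ` hist g" using floor_hist_sub[OF e(2)] \<open>g' = g\<close> by simp
  ultimately show False using Max_ge[OF fin] M_def by fastforce
qed

lemma nu_nonterm_clause:
  assumes nuG: "set_pmf \<nu> \<subseteq> G" and nt: "nonterm (nu_game \<Gamma> G F \<nu>) hh"
  shows "case plr (nu_game \<Gamma> G F \<nu>) hh of None \<Rightarrow> is_dist (moves (nu_game \<Gamma> G F \<nu>) hh) (chance (nu_game \<Gamma> G F \<nu>) hh)
                         | Some j \<Rightarrow> j \<in> players (nu_game \<Gamma> G F \<nu>)"
proof -
  have "hh \<in> hist (nu_game \<Gamma> G F \<nu>)" using nt by (simp add: nonterm_def)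
  then show ?thesis
  proof (cases rule: nu_hist_cases)
    case 1
    have hg: "\<And>g. g \<in> G \<Longrightarrow> [] \<in> hist g" using aw_basic(1)[OF aw] by (simp add: std_game_def)
    have "is_dist (Inl ` G) (\<lambda>mv. case mv of Inl g' \<Rightarrow> pmf \<nu> g' | Inr _ \<Rightarrow> 0)"
    proof (rule is_dist_reindex[where p = "pmf \<nu>"])
      show "is_dist G (pmf \<nu>)" unfolding is_dist_def
        using pmf_has_sum_1[OF nuG] nuG set_pmf_iff by fastforce
    qed (auto simp: inj_def split: sum.splits)
    moreover have "moves (nu_game \<Gamma> G F \<nu>) [] = Inl ` G" using nu_moves_nil[where G=G, OF hg] by simp
    ultimately show ?thesis using 1 by (simp add: nu_chance_nil)
  next
    case (2 g h)
    have ntg: "nonterm g h" using nu_nonterm[OF 2(2,3)] nt 2(1) by simp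
    show ?thesis
    proof (cases "plr g h")
      case None
      have std: "std_game g" using aw_basic(1)[OF aw 2(2)] .
      have d: "is_dist (moves g h) (chance g h)" using std ntg None unfolding std_game_def by auto
      have "is_dist (Inr ` moves g h) (\<lambda>mv. case mv of Inr m \<Rightarrow> chance g h m | Inl _ \<Rightarrow> 0)"
        by (rule is_dist_reindex[OF d]) (auto simp: inj_def split: sum.splits)
      moreover have "moves (nu_game \<Gamma> G F \<nu>) hh = Inr ` moves g h"
        using 2 nu_moves[of \<Gamma> G F \<nu> g h] floor_moves_chance[OF 2(3) None] by simp
      ultimately show ?thesis using 2(1) None nu_plr nu_chance by (simp add: nu_plr nu_chance)
    next
      case (Some i)
      have d: "dp g i h" using ntg Some by (simp add: dp_def)
      have ip: "i \<in> players \<Gamma>"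
        using aw_basic(1,4)[OF aw 2(2)] ntg Some unfolding std_game_def by fastforce
      have "fst (F g h) \<in> Gi G F i" unfolding Gi_def using 2(2) d by blast
      then show ?thesis using 2(1) Some ip by (simp add: nu_plr nu_players)
    qed
  qed
qed

lemma nu_class_elem:
  assumes "Inl g # map Inr h \<in> nu_class G F i v"
  shows "g \<in> G" "h \<in> floor_hist F g" "dp g i h" "F g h = v"
proof -
  obtain g2 h2 where x: "Inl g # map Inr h = Inl g2 # map Inr h2 \<and> g2 \<in> G \<and> h2 \<in> floor_hist F g2 \<and> dp g2 i h2 \<and> F g2 h2 = v"
    using assms[unfolded nu_class_mem] by (elim exE) (rule that)
  have "g = g2 \<and> h = h2" using Inl_map_eq x by (elim conjE)
  then show "g \<in> G" "h \<in> floor_hist F g" "dp g i h" "F g h = v" using x by simp_all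
qed

lemma nu_class_Al:
  assumes "x \<in> nu_class G F i v"
  shows "\<exists>g h. x = Inl g # map Inr h \<and> moves (nu_game \<Gamma> G F \<nu>) x = Inr ` Al F g h \<and> F g h = v"
proof -
  from assms obtain g h where x: "x = Inl g # map Inr h" "g \<in> G" "h \<in> floor_hist F g" "dp g i h" "F g h = v"
    unfolding nu_class_mem by blast
  then show ?thesis using nu_moves_Al[OF x(2,3,4)] by blast
qed

lemma nu_players_clause:
  assumes "j \<in> players (nu_game \<Gamma> G F \<nu>)"
  shows "(\<forall>I \<in> infosets (nu_game \<Gamma> G F \<nu>) j. I \<noteq> {})
        \<and> \<Union> (infosets (nu_game \<Gamma> G F \<nu>) j) = {h. dp (nu_game \<Gamma> G F \<nu>) j h}
        \<and> (\<forall>I \<in> infosets (nu_game \<Gamma> G F \<nu>) j. \<forall>J \<in> infosets (nu_game \<Gamma> G F \<nu>) j. I \<noteq> J \<longrightarrow> I \<inter> J = {})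
        \<and> (\<forall>I \<in> infosets (nu_game \<Gamma> G F \<nu>) j. \<forall>h \<in> I. \<forall>h' \<in> I. moves (nu_game \<Gamma> G F \<nu>) h = moves (nu_game \<Gamma> G F \<nu>) h')"
proof -
  obtain i g' where j: "j = (i, g')" by (cases j)
  let ?N = "nu_game \<Gamma> G F \<nu>"
  have a: "\<forall>I \<in> infosets ?N j. I \<noteq> {}"
  proof
    fix I assume "I \<in> infosets ?N j"
    then obtain g1 h1 where I: "I = nu_class G F i (F g1 h1)" "g1 \<in> G" "h1 \<in> floor_hist F g1" "dp g1 i h1"
      unfolding j nu_infosets by blast
    then have "Inl g1 # map Inr h1 \<in> nu_class G F i (F g1 h1)" unfolding nu_class_mem by blast
    then show "I \<noteq> {}" using I(1) by blast
  qed
  have b: "\<Union> (infosets ?N j) = {h. dp ?N j h}"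
  proof (rule set_eqI)
    fix x
    show "x \<in> \<Union> (infosets ?N j) \<longleftrightarrow> x \<in> {h. dp ?N j h}"
    proof
      assume "x \<in> \<Union> (infosets ?N j)"
      then obtain g1 h1 where x1: "x \<in> nu_class G F i (F g1 h1)" "fst (F g1 h1) = g'"
        unfolding j nu_infosets by blast
      then obtain g h where x: "x = Inl g # map Inr h" "g \<in> G" "h \<in> floor_hist F g" "dp g i h" "F g h = F g1 h1"
        unfolding nu_class_mem by blast
      then show "x \<in> {h. dp ?N j h}" using nu_dp[OF x(2,3)] x1(2) j by simp
    next
      assume "x \<in> {h. dp ?N j h}"
      then have d: "dp ?N (i, g') x" using j by simp
      then have "x \<in> hist ?N" by (rule dp_hist)
      then show "x \<in> \<Union> (infosets ?N j)"
      proof (cases rule: nu_hist_cases)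
        case 1 then show ?thesis using d by (simp add: dp_def)
      next
        case (2 g h)
        then have "dp g i h" "fst (F g h) = g'" using nu_dp[OF 2(2,3)] d by simp_all
        then have "nu_class G F i (F g h) \<in> infosets ?N j" "x \<in> nu_class G F i (F g h)"
          using 2 unfolding j nu_infosets nu_class_mem by blast+
        then show ?thesis by blast
      qed
    qed
  qed
  have c: "\<forall>I \<in> infosets ?N j. \<forall>J \<in> infosets ?N j. I \<noteq> J \<longrightarrow> I \<inter> J = {}"
  proof (intro ballI impI)
    fix I J assume I: "I \<in> infosets ?N j" and J: "J \<in> infosets ?N j" and ne: "I \<noteq> J"
    obtain v1 where v1: "I = nu_class G F i v1" using I unfolding j nu_infosets by blast
    obtain v2 where v2: "J = nu_class G F i v2" using J unfolding j nu_infosets by blast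
    show "I \<inter> J = {}"
    proof (rule ccontr)
      assume "I \<inter> J \<noteq> {}"
      then obtain x where "x \<in> nu_class G F i v1" "x \<in> nu_class G F i v2" using v1 v2 by blast
      then obtain g h where "x = Inl g # map Inr h" "x \<in> nu_class G F i v1" "x \<in> nu_class G F i v2"
        unfolding nu_class_mem by blast
      then have a1: "Inl g # map Inr h \<in> nu_class G F i v1" and a2: "Inl g # map Inr h \<in> nu_class G F i v2" by simp_all
      have "F g h = v1" "F g h = v2" using nu_class_elem(4)[OF a1] nu_class_elem(4)[OF a2] by simp_all
      then have "v1 = v2" by simp
      then show False using ne v1 v2 by simp
    qed
  qed
  have d: "\<forall>I \<in> infosets ?N j. \<forall>h \<in> I. \<forall>h' \<in> I. moves ?N h = moves ?N h'"
  proof (intro ballI)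
    fix I h h' assume I: "I \<in> infosets ?N j" and h: "h \<in> I" and h': "h' \<in> I"
    obtain v where v: "I = nu_class G F i v" using I unfolding j nu_infosets by blast
    obtain g1 k1 where 1: "moves ?N h = Inr ` Al F g1 k1" "F g1 k1 = v" using nu_class_Al[of h i v \<nu>] h v by blast
    obtain g2 k2 where 2: "moves ?N h' = Inr ` Al F g2 k2" "F g2 k2 = v" using nu_class_Al[of h' i v \<nu>] h' v by blast
    have "Al F g1 k1 = Al F g2 k2" unfolding Al_def using 1(2) 2(2) by simp
    then show "moves ?N h = moves ?N h'" using 1 2 by simp
  qed
  show ?thesis using a b c d by blast
qed

lemma nu_std:
  assumes "set_pmf \<nu> \<subseteq> G"
  shows "std_game (nu_game \<Gamma> G F \<nu>)"
  unfolding std_game_def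
proof (intro conjI)
  show "[] \<in> hist (nu_game \<Gamma> G F \<nu>)" by (simp add: nu_hist)
  show "\<forall>h m. h @ [m] \<in> hist (nu_game \<Gamma> G F \<nu>) \<longrightarrow> h \<in> hist (nu_game \<Gamma> G F \<nu>)"
    by (intro allI impI) (rule nu_prefix_closed)
  show "\<not> (\<exists>p. \<forall>n. map p [0..<n] \<in> hist (nu_game \<Gamma> G F \<nu>))" by (rule nu_no_inf)
  show "\<forall>h. nonterm (nu_game \<Gamma> G F \<nu>) h \<longrightarrow>
          (case plr (nu_game \<Gamma> G F \<nu>) h of None \<Rightarrow> is_dist (moves (nu_game \<Gamma> G F \<nu>) h) (chance (nu_game \<Gamma> G F \<nu>) h)
                         | Some i \<Rightarrow> i \<in> players (nu_game \<Gamma> G F \<nu>))"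
    by (intro allI impI) (rule nu_nonterm_clause[OF assms])
  show "\<forall>i \<in> players (nu_game \<Gamma> G F \<nu>).
          (\<forall>I \<in> infosets (nu_game \<Gamma> G F \<nu>) i. I \<noteq> {})
        \<and> \<Union> (infosets (nu_game \<Gamma> G F \<nu>) i) = {h. dp (nu_game \<Gamma> G F \<nu>) i h}
        \<and> (\<forall>I \<in> infosets (nu_game \<Gamma> G F \<nu>) i. \<forall>J \<in> infosets (nu_game \<Gamma> G F \<nu>) i. I \<noteq> J \<longrightarrow> I \<inter> J = {})
        \<and> (\<forall>I \<in> infosets (nu_game \<Gamma> G F \<nu>) i. \<forall>h \<in> I. \<forall>h' \<in> I. moves (nu_game \<Gamma> G F \<nu>) h = moves (nu_game \<Gamma> G F \<nu>) h')"
    by (intro ballI) (rule nu_players_clause)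
qed

lemma info_of_nu:
  assumes "g \<in> G" "q \<in> floor_hist F g" "dp g i q" "fst (F g q) = g'"
  shows "info_of (nu_game \<Gamma> G F \<nu>) (i, g') (Inl g # map Inr q) = nu_class G F i (F g q)"
  unfolding info_of_def
proof (rule the_equality)
  show "nu_class G F i (F g q) \<in> infosets (nu_game \<Gamma> G F \<nu>) (i, g') \<and> Inl g # map Inr q \<in> nu_class G F i (F g q)"
    using assms unfolding nu_infosets nu_class_mem by blast
next
  fix I assume "I \<in> infosets (nu_game \<Gamma> G F \<nu>) (i, g') \<and> Inl g # map Inr q \<in> I"
  then obtain v where v: "I = nu_class G F i v" "Inl g # map Inr q \<in> nu_class G F i v"
    unfolding nu_infosets by blast
  then show "I = nu_class G F i (F g q)" using nu_class_elem(4)[OF v(2)] by simp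
qed

lemma exp_nu:
  assumes "g \<in> G" "h \<in> floor_hist F g"
  shows "experience (nu_game \<Gamma> G F \<nu>) (i, g') (Inl g # map Inr h)
    = map (\<lambda>(v, m). (nu_class G F i v, Inr m)) (filter (\<lambda>(v, m). fst v = g') (Sq F g i h))"
proof -
  let ?N = "nu_game \<Gamma> G F \<nu>"
  let ?hh = "Inl g # map Inr h"
  define n where "n = length h"
  have std: "std_game g" using aw_basic(1)[OF aw assms(1)] .
  have hg: "h \<in> hist g" using floor_hist_sub[OF assms(2)] .
  have u: "[0..<length ?hh] = 0 # map Suc [0..<n]"
    by (simp add: n_def map_Suc_upt upt_conv_Cons del: upt_Suc)
  have t: "\<And>k. take (Suc k) ?hh = Inl g # map Inr (take k h)" by (simp add: take_map)
  have P: "\<And>k. plr ?N (Inl g # map Inr (take k h)) = Some (i, g') \<longleftrightarrow>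
      plr g (take k h) = Some i \<and> fst (F g (take k h)) = g'"
    by (simp add: nu_plr split: option.splits)
  have "experience ?N (i, g') ?hh = map (\<lambda>k. (info_of ?N (i, g') (Inl g # map Inr (take k h)), ?hh ! Suc k))
      (filter (\<lambda>k. plr g (take k h) = Some i \<and> fst (F g (take k h)) = g') [0..<n])"
    unfolding experience_def u by (simp add: filter_map comp_def t P del: take_Suc_Cons)
  also have "\<dots> = map (\<lambda>k. (nu_class G F i (F g (take k h)), Inr (h ! k)))
      (filter (\<lambda>k. plr g (take k h) = Some i \<and> fst (F g (take k h)) = g') [0..<n])"
  proof (rule map_cong[OF refl])
    fix k assume "k \<in> set (filter (\<lambda>k. plr g (take k h) = Some i \<and> fst (F g (take k h)) = g') [0..<n])"
    then have k: "k < n" "plr g (take k h) = Some i" "fst (F g (take k h)) = g'" by auto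
    have pr: "prefix (take k h) h" "take k h \<noteq> h" using k(1) n_def by (auto simp: take_is_prefix)
    have d: "dp g i (take k h)" using strict_prefix_dp[OF std hg pr k(2)] .
    have fl: "take k h \<in> floor_hist F g" using floor_prefix[OF std assms(2) pr(1)] .
    show "(info_of ?N (i, g') (Inl g # map Inr (take k h)), ?hh ! Suc k) = (nu_class G F i (F g (take k h)), Inr (h ! k))"
      using info_of_nu[OF assms(1) fl d k(3)] k(1) n_def by simp
  qed
  also have "\<dots> = map (\<lambda>(v, m). (nu_class G F i v, Inr m)) (filter (\<lambda>(v, m). fst v = g') (Sq F g i h))"
    unfolding Sq_def n_def by (simp add: filter_map comp_def filter_filter conj_commute)
  finally show ?thesis .
qed

lemma nu_pr:
  assumes "set_pmf \<nu> \<subseteq> G"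
  shows "perfect_recall (nu_game \<Gamma> G F \<nu>)"
  unfolding perfect_recall_def
proof (intro ballI)
  fix j I x y
  assume j: "j \<in> players (nu_game \<Gamma> G F \<nu>)" and I: "I \<in> infosets (nu_game \<Gamma> G F \<nu>) j"
    and x: "x \<in> I" and y: "y \<in> I"
  obtain i g' where jj: "j = (i, g')" by (cases j)
  obtain v where v: "I = nu_class G F i v" using I unfolding jj nu_infosets by blast
  have xv: "x \<in> nu_class G F i v" and yv: "y \<in> nu_class G F i v" using x y v by simp_all
  obtain g1 h1 where x1: "x = Inl g1 # map Inr h1" using xv unfolding nu_class_mem by blast
  obtain g2 h2 where y2: "y = Inl g2 # map Inr h2" using yv unfolding nu_class_mem by blast
  have ax: "Inl g1 # map Inr h1 \<in> nu_class G F i v" using x x1 v by simp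
  have ay: "Inl g2 # map Inr h2 \<in> nu_class G F i v" using y y2 v by simp
  have "Sq F g1 i h1 = Sq F g2 i h2"
    using Sq_eq[OF nu_class_elem(1)[OF ax] nu_class_elem(3)[OF ax] nu_class_elem(1)[OF ay] nu_class_elem(3)[OF ay]]
      nu_class_elem(4)[OF ax] nu_class_elem(4)[OF ay] by simp
  then show "experience (nu_game \<Gamma> G F \<nu>) j x = experience (nu_game \<Gamma> G F \<nu>) j y"
    unfolding jj x1 y2 using exp_nu[OF nu_class_elem(1,2)[OF ax]] exp_nu[OF nu_class_elem(1,2)[OF ay]] by simp
qed

lemma reach_nu:
  assumes gG: "g \<in> G" and zf: "z \<in> floor_hist F g"
    and C: "\<And>j h1. h1 \<in> floor_hist F g \<Longrightarrow> dp g j h1 \<Longrightarrow>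
        \<tau> (j, fst (F g h1)) (Inl g # map Inr h1) = (\<lambda>mv. case mv of Inr m \<Rightarrow> \<tau>' j (fst (F g h1)) g h1 m | Inl _ \<Rightarrow> 0)"
  shows "reach (nu_game \<Gamma> G F \<nu>) \<tau> (Inl g # map Inr z) = pmf \<nu> g * greach F g \<tau>' z"
proof -
  let ?N = "nu_game \<Gamma> G F \<nu>"
  let ?hh = "Inl g # map Inr z"
  have std: "std_game g" using aw_basic(1)[OF aw gG] .
  have hg: "z \<in> hist g" using floor_hist_sub[OF zf] .
  define c where "c = (\<lambda>k. case plr ?N (take k ?hh) of None \<Rightarrow> chance ?N (take k ?hh) (?hh ! k)
                              | Some i \<Rightarrow> \<tau> i (take k ?hh) (?hh ! k))"
  have "reach ?N \<tau> ?hh = (\<Prod>k<Suc (length z). c k)" unfolding reach_def c_def by simp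
  also have "\<dots> = c 0 * (\<Prod>k<length z. c (Suc k))" by (rule prod.lessThan_Suc_shift)
  also have "c 0 = pmf \<nu> g" unfolding c_def by (simp add: nu_chance_nil)
  also have "(\<Prod>k<length z. c (Suc k)) = greach F g \<tau>' z"
    unfolding greach_def
  proof (rule prod.cong[OF refl])
    fix k assume "k \<in> {..<length z}"
    then have k: "k < length z" by simp
    have t: "take (Suc k) ?hh = Inl g # map Inr (take k z)" by (simp add: take_map)
    have n: "?hh ! Suc k = Inr (z ! k)" using k by simp
    show "c (Suc k) = (case plr g (take k z) of None \<Rightarrow> chance g (take k z) (z ! k)
         | Some j \<Rightarrow> \<tau>' j (fst (F g (take k z))) g (take k z) (z ! k))"
    proof (cases "plr g (take k z)")
      case None
      then show ?thesis unfolding c_def t n by (simp add: nu_plr nu_chance)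
    next
      case (Some j)
      have pr: "prefix (take k z) z" "take k z \<noteq> z" using k by (auto simp: take_is_prefix)
      have d: "dp g j (take k z)" using strict_prefix_dp[OF std hg pr Some] .
      have fl: "take k z \<in> floor_hist F g" using floor_prefix[OF std zf pr(1)] .
      show ?thesis unfolding c_def t n using Some C[OF fl d] by (simp add: nu_plr)
    qed
  qed
  finally show ?thesis .
qed

lemma greach_zero:
  assumes gG: "g \<in> G" and zh: "z \<in> hist g" and zf: "z \<notin> floor_hist F g"
    and LS: "\<And>j g''. j \<in> players \<Gamma> \<Longrightarrow> g'' \<in> Gi G F j \<Longrightarrow> local_strategy G F j g'' (\<tau>' j g'')"
  shows "greach F g \<tau>' z = 0"
proof -
  have std: "std_game g" using aw_basic(1)[OF aw gG] .
  obtain h1 m j where hm: "prefix (h1 @ [m]) z" "plr g h1 = Some j" "\<not> (\<forall>h2 \<in> snd (F g h1). h2 @ [m] \<in> hist (fst (F g h1)))"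
    using zh zf unfolding floor_hist_def by blast
  define k where "k = length h1"
  have kz: "k < length z" using prefix_length_le[OF hm(1)] k_def by simp
  have p1: "prefix h1 (h1 @ [m])" by simp
  have pz: "prefix h1 z" using prefix_order.trans[OF p1 hm(1)] .
  have tk: "take k z = h1" using prefix_take_eq[OF pz] k_def by simp
  have nk: "z ! k = m" using snoc_prefix_nth[OF hm(1)] k_def by simp
  have pr: "prefix h1 z" "h1 \<noteq> z" using pz kz k_def by auto
  have d: "dp g j h1" using strict_prefix_dp[OF std zh pr hm(2)] .
  have jP: "j \<in> players \<Gamma>" using aw_basic(1,4)[OF aw gG] d unfolding std_game_def dp_def by fastforce
  have gi: "fst (F g h1) \<in> Gi G F j" unfolding Gi_def using gG d by blast
  have "is_dist {m. \<forall>h2 \<in> snd (F g h1). h2 @ [m] \<in> hist (fst (F g h1))} (\<tau>' j (fst (F g h1)) g h1)"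
    using LS[OF jP gi] gG d unfolding local_strategy_def by blast
  then have z0: "\<tau>' j (fst (F g h1)) g h1 m = 0" using hm(3) unfolding is_dist_def by blast
  have "(case plr g (take k z) of None \<Rightarrow> chance g (take k z) (z ! k)
         | Some j \<Rightarrow> \<tau>' j (fst (F g (take k z))) g (take k z) (z ! k)) = 0"
    using tk nk hm(2) z0 by simp
  then show ?thesis unfolding greach_def
    by (intro prod_zero) (use kz in blast)+
qed

lemma EU_eq:
  assumes gG: "g \<in> G"
    and C: "\<And>j h1. h1 \<in> floor_hist F g \<Longrightarrow> dp g j h1 \<Longrightarrow>
        \<tau> (j, fst (F g h1)) (Inl g # map Inr h1) = (\<lambda>mv. case mv of Inr m \<Rightarrow> \<tau>' j (fst (F g h1)) g h1 m | Inl _ \<Rightarrow> 0)"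
    and Z: "\<And>z. z \<in> hist g \<Longrightarrow> z \<notin> floor_hist F g \<Longrightarrow> greach F g \<tau>' z = 0"
  shows "EU (nu_game \<Gamma> G F \<nu>) \<tau> (i, g) = pmf \<nu> g * GEU F g \<tau>' i"
proof -
  let ?N = "nu_game \<Gamma> G F \<nu>"
  define f where "f = (\<lambda>zz. reach ?N \<tau> zz * util ?N (i, g) zz)"
  define A where "A = {z. terminal g z \<and> z \<in> floor_hist F g}"
  define T where "T = (\<lambda>z. Inl g # map Inr z) ` A"
  have finH: "finite (hist g)" using aw_basic(2)[OF aw gG] .
  have finT0: "finite {z. terminal g z}" using finH by (rule finite_subset[rotated]) (auto simp: terminal_def)
  have finA: "finite A" using finT0 unfolding A_def by (rule finite_subset[rotated]) auto
  have term_iff: "terminal ?N (Inl g # map Inr z) \<longleftrightarrow> terminal g z" if "z \<in> floor_hist F g" for z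
  proof -
    have "Inl g # map Inr z \<in> hist ?N" using gG that nu_hist_Inl by blast
    moreover have "z \<in> hist g" using floor_hist_sub[OF that] .
    ultimately show ?thesis using nu_nonterm[OF gG that] unfolding terminal_def nonterm_def by blast
  qed
  have "EU ?N \<tau> (i, g) = infsum f {zz. terminal ?N zz}" unfolding EU_def f_def by simp
  also have "\<dots> = infsum f T"
  proof (rule infsum_cong_neutral)
    fix x assume "x \<in> T - {zz. terminal ?N zz}"
    then show "f x = 0" using term_iff unfolding T_def A_def by auto
  next
    fix x assume x: "x \<in> {zz. terminal ?N zz} - T"
    then have "x \<in> hist ?N" by (simp add: terminal_def)
    then show "f x = 0"
    proof (cases rule: nu_hist_cases)
      case 1 then show ?thesis by (simp add: f_def nu_util_nil)
    next
      case (2 g2 h)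
      show ?thesis
      proof (cases "g2 = g")
        case False then show ?thesis using 2 by (simp add: f_def nu_util)
      next
        case True
        then have "terminal g h" using term_iff[of h] 2 x by simp
        then have "x \<in> T" using 2 True unfolding T_def A_def by blast
        then show ?thesis using x by simp
      qed
    qed
  qed simp
  also have "\<dots> = sum f T" using finA unfolding T_def by simp
  also have "\<dots> = (\<Sum>z\<in>A. f (Inl g # map Inr z))" unfolding T_def
    by (rule sum.reindex_cong[OF _ refl refl]) (auto simp: inj_on_def dest: Inl_map_eq)
  also have "\<dots> = (\<Sum>z\<in>A. pmf \<nu> g * (greach F g \<tau>' z * util g i z))"
  proof (rule sum.cong[OF refl])
    fix z assume "z \<in> A"
    then have zf: "z \<in> floor_hist F g" by (simp add: A_def)
    have "reach ?N \<tau> (Inl g # map Inr z) = pmf \<nu> g * greach F g \<tau>' z"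
      by (rule reach_nu[where \<tau>' = \<tau>', OF gG zf C])
    then show "f (Inl g # map Inr z) = pmf \<nu> g * (greach F g \<tau>' z * util g i z)"
      by (simp add: f_def nu_util)
  qed
  also have "\<dots> = pmf \<nu> g * (\<Sum>z\<in>A. greach F g \<tau>' z * util g i z)" by (simp add: sum_distrib_left)
  also have "(\<Sum>z\<in>A. greach F g \<tau>' z * util g i z) = GEU F g \<tau>' i"
    unfolding GEU_def
    by (rule sum.mono_neutral_left[OF finT0]) (auto simp: A_def Z terminal_def)
  finally show ?thesis .
qed

lemma LS1:
  assumes "local_strategy G F i g' s" "gp \<in> G" "dp gp i h" "fst (F gp h) = g'"
  shows "is_dist (Al F gp h) (s gp h)"
proof -
  have "is_dist {m. \<forall>h2 \<in> snd (F gp h). h2 @ [m] \<in> hist g'} (s gp h)"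
    using assms unfolding local_strategy_def by blast
  then show ?thesis unfolding Al_def using assms(4) by simp
qed

lemma LS2:
  assumes "local_strategy G F i g' s" "g1 \<in> G" "g2 \<in> G" "dp g1 i h1" "dp g2 i h2" "fst (F g1 h1) = g'" "F g1 h1 = F g2 h2"
  shows "s g1 h1 = s g2 h2"
  using assms unfolding local_strategy_def by blast

lemma LS_beh:
  assumes LS: "local_strategy G F i g' s"
    and T: "\<And>gh h. gh \<in> G \<Longrightarrow> h \<in> floor_hist F gh \<Longrightarrow> dp gh i h \<Longrightarrow> fst (F gh h) = g' \<Longrightarrow>
        \<tau> (Inl gh # map Inr h) = (\<lambda>mv. case mv of Inr m \<Rightarrow> s gh h m | Inl _ \<Rightarrow> 0)"
  shows "behavioral (nu_game \<Gamma> G F \<nu>) (i, g') \<tau>"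
  unfolding behavioral_def
proof (intro conjI allI impI ballI)
  let ?N = "nu_game \<Gamma> G F \<nu>"
  fix hh assume d: "dp ?N (i, g') hh"
  then have "hh \<in> hist ?N" by (rule dp_hist)
  then show "is_dist (moves ?N hh) (\<tau> hh)"
  proof (cases rule: nu_hist_cases)
    case 1 then show ?thesis using d by (simp add: dp_def)
  next
    case (2 gh h)
    have dd: "dp gh i h" "fst (F gh h) = g'" using nu_dp[OF 2(2,3)] d 2(1) by simp_all
    have "is_dist (Inr ` Al F gh h) (\<lambda>mv. case mv of Inr m \<Rightarrow> s gh h m | Inl _ \<Rightarrow> 0)"
      by (rule is_dist_reindex[OF LS1[OF LS 2(2) dd]]) (auto simp: inj_def split: sum.splits)
    then show ?thesis using 2(1) nu_moves_Al[OF 2(2,3) dd(1)] T[OF 2(2,3) dd] by simp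
  qed
next
  let ?N = "nu_game \<Gamma> G F \<nu>"
  fix I x y assume I: "I \<in> infosets ?N (i, g')" and x: "x \<in> I" and y: "y \<in> I"
  obtain g1 h1 where v: "I = nu_class G F i (F g1 h1)" "fst (F g1 h1) = g'" using I unfolding nu_infosets by blast
  have xv: "x \<in> nu_class G F i (F g1 h1)" and yv: "y \<in> nu_class G F i (F g1 h1)" using x y v by simp_all
  obtain a b where ab: "x = Inl a # map Inr b" using xv unfolding nu_class_mem by blast
  obtain c d where cd: "y = Inl c # map Inr d" using yv unfolding nu_class_mem by blast
  have ax: "Inl a # map Inr b \<in> nu_class G F i (F g1 h1)" using xv ab by simp
  have ay: "Inl c # map Inr d \<in> nu_class G F i (F g1 h1)" using yv cd by simp
  note e1 = nu_class_elem[OF ax] and e2 = nu_class_elem[OF ay]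
  have "s a b = s c d" using LS2[OF LS e1(1) e2(1) e1(3) e2(3)] e1(4) e2(4) v(2) by simp
  then show "\<tau> x = \<tau> y" using ab cd T[OF e1(1,2,3)] T[OF e2(1,2,3)] e1(4) e2(4) v(2) by simp
qed

lemma beh_LS:
  assumes B: "behavioral (nu_game \<Gamma> G F \<nu>) (i, g') s" and LSd: "local_strategy G F i g' dflt"
  shows "\<exists>s'. local_strategy G F i g' s' \<and> (\<forall>gh h. gh \<in> G \<longrightarrow> h \<in> floor_hist F gh \<longrightarrow> dp gh i h \<longrightarrow> fst (F gh h) = g' \<longrightarrow>
        s (Inl gh # map Inr h) = (\<lambda>mv. case mv of Inr m \<Rightarrow> s' gh h m | Inl _ \<Rightarrow> 0))"
proof -
  let ?N = "nu_game \<Gamma> G F \<nu>"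
  have B1: "\<And>hh. dp ?N (i, g') hh \<Longrightarrow> is_dist (moves ?N hh) (s hh)" using B unfolding behavioral_def by blast
  have B2: "\<And>I x y. I \<in> infosets ?N (i, g') \<Longrightarrow> x \<in> I \<Longrightarrow> y \<in> I \<Longrightarrow> s x = s y"
    using B unfolding behavioral_def by blast
  define P where "P = (\<lambda>v x. fst x \<in> G \<and> snd x \<in> floor_hist F (fst x) \<and> dp (fst x) i (snd x) \<and> F (fst x) (snd x) = v)"
  define pick where "pick = (\<lambda>v. SOME x. P v x)"
  define s' where "s' = (\<lambda>gp h. if \<exists>x. P (F gp h) x
      then (\<lambda>m. s (Inl (fst (pick (F gp h))) # map Inr (snd (pick (F gp h)))) (Inr m)) else dflt gp h)"
  have pickP: "P v (pick v)" if "\<exists>x. P v x" for v using that unfolding pick_def by (rule someI_ex)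
  have pick_dist: "is_dist (Al F gp h) (\<lambda>m. s (Inl (fst (pick (F gp h))) # map Inr (snd (pick (F gp h)))) (Inr m))"
    if ex: "\<exists>x. P (F gp h) x" and gp: "gp \<in> G" "dp gp i h" "fst (F gp h) = g'" for gp h
  proof -
    obtain a b where ab: "pick (F gp h) = (a, b)" by (cases "pick (F gp h)")
    have Pab: "a \<in> G" "b \<in> floor_hist F a" "dp a i b" "F a b = F gp h" using pickP[OF ex] ab unfolding P_def by simp_all
    have "dp ?N (i, g') (Inl a # map Inr b)" using nu_dp[OF Pab(1,2)] Pab(3,4) gp(3) by simp
    then have "is_dist (moves ?N (Inl a # map Inr b)) (s (Inl a # map Inr b))" by (rule B1)
    then have "is_dist (Inr ` Al F a b) (s (Inl a # map Inr b))" using nu_moves_Al[OF Pab(1,2,3), of \<nu>] by simp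
    moreover have "Al F a b = Al F gp h" unfolding Al_def using Pab(4) by simp
    ultimately show ?thesis using ab is_dist_Inr_back by fastforce
  qed
  have LS': "local_strategy G F i g' s'"
    unfolding local_strategy_def
  proof (intro conjI ballI allI impI)
    fix gp h assume gp: "gp \<in> G" and a: "dp gp i h \<and> fst (F gp h) = g'"
    have st: "{m. \<forall>h2 \<in> snd (F gp h). h2 @ [m] \<in> hist g'} = Al F gp h" unfolding Al_def using a by simp
    show "is_dist {m. \<forall>h2 \<in> snd (F gp h). h2 @ [m] \<in> hist g'} (s' gp h)"
    proof (cases "\<exists>x. P (F gp h) x")
      case True
      then show ?thesis unfolding st s'_def using pick_dist[OF True gp] a by simp
    next
      case False
      then show ?thesis unfolding st s'_def using LS1[OF LSd gp] a by simp
    qed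
  next
    fix g1 g2 h1 h2 assume g1: "g1 \<in> G" and g2: "g2 \<in> G"
      and a: "dp g1 i h1 \<and> dp g2 i h2 \<and> fst (F g1 h1) = g' \<and> F g1 h1 = F g2 h2"
    show "s' g1 h1 = s' g2 h2"
    proof (cases "\<exists>x. P (F g1 h1) x")
      case True then show ?thesis unfolding s'_def using a by simp
    next
      case False
      have "dflt g1 h1 = dflt g2 h2" using a LS2[OF LSd g1 g2, of h1 h2] by blast
      then show ?thesis unfolding s'_def using a False by simp
    qed
  qed
  have corr: "s (Inl gh # map Inr h) = (\<lambda>mv. case mv of Inr m \<Rightarrow> s' gh h m | Inl _ \<Rightarrow> 0)"
    if gh: "gh \<in> G" "h \<in> floor_hist F gh" "dp gh i h" "fst (F gh h) = g'" for gh h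
  proof -
    have ex: "\<exists>x. P (F gh h) x" using gh unfolding P_def by (intro exI[of _ "(gh, h)"]) simp
    obtain a b where ab: "pick (F gh h) = (a, b)" by (cases "pick (F gh h)")
    have Pab: "a \<in> G" "b \<in> floor_hist F a" "dp a i b" "F a b = F gh h" using pickP[OF ex] ab unfolding P_def by simp_all
    have Iinf: "nu_class G F i (F gh h) \<in> infosets ?N (i, g')" unfolding nu_infosets using gh by blast
    have m1: "Inl gh # map Inr h \<in> nu_class G F i (F gh h)" unfolding nu_class_mem using gh by blast
    have m2: "Inl a # map Inr b \<in> nu_class G F i (F gh h)" unfolding nu_class_mem using Pab by blast
    have eq: "s (Inl a # map Inr b) = s (Inl gh # map Inr h)" using B2[OF Iinf m2 m1] .
    have dN: "dp ?N (i, g') (Inl gh # map Inr h)" using nu_dp[OF gh(1,2)] gh(3,4) by simp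
    have dist: "is_dist (Inr ` Al F gh h) (s (Inl gh # map Inr h))" using B1[OF dN] nu_moves_Al[OF gh(1,2,3), of \<nu>] by simp
    show ?thesis
    proof (rule ext)
      fix mv show "s (Inl gh # map Inr h) mv = (case mv of Inr m \<Rightarrow> s' gh h m | Inl _ \<Rightarrow> 0)"
      proof (cases mv)
        case (Inl x)
        have "mv \<notin> Inr ` Al F gh h" using Inl by auto
        then show ?thesis using dist Inl unfolding is_dist_def by auto
      next
        case (Inr m)
        then show ?thesis unfolding s'_def using ex ab eq by simp
      qed
    qed
  qed
  show ?thesis using LS' corr by blast
qed

lemma Gi_sub: "g' \<in> Gi G F i \<Longrightarrow> g' \<in> G"
  unfolding Gi_def using aw_F(1)[OF aw] by blast

lemma EU_dev:
  assumes GP: "gen_profile \<Gamma> G F \<sigma>'" and CO: "corresponds G F \<sigma> \<sigma>'"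
    and ip: "i \<in> players \<Gamma>" and gi: "g' \<in> Gi G F i" and LS: "local_strategy G F i g' s'"
    and Tc: "\<And>gh h. gh \<in> G \<Longrightarrow> h \<in> floor_hist F gh \<Longrightarrow> dp gh i h \<Longrightarrow> fst (F gh h) = g' \<Longrightarrow>
        t (Inl gh # map Inr h) = (\<lambda>mv. case mv of Inr m \<Rightarrow> s' gh h m | Inl _ \<Rightarrow> 0)"
  shows "EU (nu_game \<Gamma> G F \<nu>) (\<sigma>((i, g') := t)) (i, g') = pmf \<nu> g' * GEU F g' (\<sigma>'(i := (\<sigma>' i)(g' := s'))) i"
proof (rule EU_eq)
  show gG: "g' \<in> G" using Gi_sub[OF gi] .
  fix j h1 assume fl: "h1 \<in> floor_hist F g'" and d: "dp g' j h1"
  show "(\<sigma>((i, g') := t)) (j, fst (F g' h1)) (Inl g' # map Inr h1) =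
     (\<lambda>mv. case mv of Inr m \<Rightarrow> (\<sigma>'(i := (\<sigma>' i)(g' := s'))) j (fst (F g' h1)) g' h1 m | Inl _ \<Rightarrow> 0)"
  proof (cases "j = i \<and> fst (F g' h1) = g'")
    case True
    then have ji: "j = i" and fg: "fst (F g' h1) = g'" by simp_all
    have "t (Inl g' # map Inr h1) = (\<lambda>mv. case mv of Inr m \<Rightarrow> s' g' h1 m | Inl _ \<Rightarrow> 0)"
      using Tc[OF gG fl d[unfolded ji] fg] .
    moreover have "(\<sigma>'(i := (\<sigma>' i)(g' := s'))) i g' = s'" by simp
    ultimately show ?thesis unfolding ji fg by simp
  next
    case False
    have "\<sigma> (j, fst (F g' h1)) (Inl g' # map Inr h1) = (\<lambda>mv. case mv of Inr m \<Rightarrow> \<sigma>' j (fst (F g' h1)) g' h1 m | Inl _ \<Rightarrow> 0)"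
      using CO gG fl d unfolding corresponds_def by blast
    moreover have "(\<sigma>'(i := (\<sigma>' i)(g' := s'))) j (fst (F g' h1)) = \<sigma>' j (fst (F g' h1))" using False by auto
    ultimately show ?thesis using False by auto
  qed
next
  fix z assume "z \<in> hist g'" "z \<notin> floor_hist F g'"
  then show "greach F g' (\<sigma>'(i := (\<sigma>' i)(g' := s'))) z = 0"
  proof (rule greach_zero[OF Gi_sub[OF gi]])
    fix j g'' assume "j \<in> players \<Gamma>" "g'' \<in> Gi G F j"
    then show "local_strategy G F j g'' ((\<sigma>'(i := (\<sigma>' i)(g' := s'))) j g'')"
      using GP LS unfolding gen_profile_def by auto
  qed
qed

lemma EU_sig:
  assumes GP: "gen_profile \<Gamma> G F \<sigma>'" and CO: "corresponds G F \<sigma> \<sigma>'" and gG: "g' \<in> G"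
  shows "EU (nu_game \<Gamma> G F \<nu>) \<sigma> (i, g') = pmf \<nu> g' * GEU F g' \<sigma>' i"
proof (rule EU_eq[OF gG])
  fix j h1 assume fl: "h1 \<in> floor_hist F g'" and d: "dp g' j h1"
  show "\<sigma> (j, fst (F g' h1)) (Inl g' # map Inr h1) = (\<lambda>mv. case mv of Inr m \<Rightarrow> \<sigma>' j (fst (F g' h1)) g' h1 m | Inl _ \<Rightarrow> 0)"
    using CO gG fl d unfolding corresponds_def by blast
next
  fix z assume "z \<in> hist g'" "z \<notin> floor_hist F g'"
  then show "greach F g' \<sigma>' z = 0"
  proof (rule greach_zero[OF gG])
    fix j g'' assume "j \<in> players \<Gamma>" "g'' \<in> Gi G F j"
    then show "local_strategy G F j g'' (\<sigma>' j g'')" using GP unfolding gen_profile_def by auto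
  qed
qed

lemma nash_iff:
  assumes pos: "\<forall>g \<in> G. pmf \<nu> g > 0" and GP: "gen_profile \<Gamma> G F \<sigma>'" and CO: "corresponds G F \<sigma> \<sigma>'"
  shows "nash (nu_game \<Gamma> G F \<nu>) \<sigma> \<longleftrightarrow> gen_nash \<Gamma> G F \<sigma>'"
proof
  let ?N = "nu_game \<Gamma> G F \<nu>"
  assume N: "nash ?N \<sigma>"
  show "gen_nash \<Gamma> G F \<sigma>'"
    unfolding gen_nash_def
  proof (intro conjI ballI allI impI)
    show "gen_profile \<Gamma> G F \<sigma>'" by (rule GP)
    fix i g' s assume ip: "i \<in> players \<Gamma>" and gi: "g' \<in> Gi G F i" and LS: "local_strategy G F i g' s"
    define t where "t = (\<lambda>hh mv. case mv of Inr m \<Rightarrow> s (projl (hd hh)) (dec (tl hh)) m | Inl (_ :: ('i, 'm) egame) \<Rightarrow> (0::real))"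
    have Tc: "\<And>gh h. t (Inl gh # map Inr h) = (\<lambda>mv. case mv of Inr m \<Rightarrow> s gh h m | Inl _ \<Rightarrow> 0)"
      unfolding t_def by simp
    have beh: "behavioral ?N (i, g') t" by (rule LS_beh[OF LS Tc])
    have pl: "(i, g') \<in> players ?N" using ip gi by (simp add: nu_players)
    have "EU ?N (\<sigma>((i, g') := t)) (i, g') \<le> EU ?N \<sigma> (i, g')" using N pl beh unfolding nash_def by blast
    then have "pmf \<nu> g' * GEU F g' (\<sigma>'(i := (\<sigma>' i)(g' := s))) i \<le> pmf \<nu> g' * GEU F g' \<sigma>' i"
      using EU_dev[OF GP CO ip gi LS Tc] EU_sig[OF GP CO Gi_sub[OF gi]] by simp
    moreover have "pmf \<nu> g' > 0" using pos Gi_sub[OF gi] by blast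
    ultimately show "GEU F g' (\<sigma>'(i := (\<sigma>' i)(g' := s))) i \<le> GEU F g' \<sigma>' i" by simp
  qed
next
  let ?N = "nu_game \<Gamma> G F \<nu>"
  assume GN: "gen_nash \<Gamma> G F \<sigma>'"
  have corr: "\<sigma> (i, g') (Inl gh # map Inr h) = (\<lambda>mv. case mv of Inr m \<Rightarrow> \<sigma>' i g' gh h m | Inl _ \<Rightarrow> 0)"
    if "gh \<in> G" "h \<in> floor_hist F gh" "dp gh i h" "fst (F gh h) = g'" for i g' gh h
    using CO that unfolding corresponds_def by blast
  have GPl: "local_strategy G F i g' (\<sigma>' i g')" if "i \<in> players \<Gamma>" "g' \<in> Gi G F i" for i g'
    using GP that unfolding gen_profile_def by blast
  show "nash ?N \<sigma>"
    unfolding nash_def profile_def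
  proof (intro conjI ballI allI impI)
    fix j assume "j \<in> players ?N"
    then obtain i g' where j: "j = (i, g')" "i \<in> players \<Gamma>" "g' \<in> Gi G F i" by (auto simp: nu_players)
    show "behavioral ?N j (\<sigma> j)" unfolding j(1)
      by (rule LS_beh[OF GPl[OF j(2,3)]]) (rule corr)
  next
    fix j s assume jp: "j \<in> players ?N" and B: "behavioral ?N j s"
    then obtain i g' where j: "j = (i, g')" "i \<in> players \<Gamma>" "g' \<in> Gi G F i" by (auto simp: nu_players)
    obtain s' where s': "local_strategy G F i g' s'"
      "\<forall>gh h. gh \<in> G \<longrightarrow> h \<in> floor_hist F gh \<longrightarrow> dp gh i h \<longrightarrow> fst (F gh h) = g' \<longrightarrow>
        s (Inl gh # map Inr h) = (\<lambda>mv. case mv of Inr m \<Rightarrow> s' gh h m | Inl _ \<Rightarrow> 0)"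
      using beh_LS[OF B[unfolded j(1)] GPl[OF j(2,3)]] by blast
    have "GEU F g' (\<sigma>'(i := (\<sigma>' i)(g' := s'))) i \<le> GEU F g' \<sigma>' i"
      using GN j(2,3) s'(1) unfolding gen_nash_def by blast
    moreover have "pmf \<nu> g' \<ge> 0" by simp
    ultimately have "pmf \<nu> g' * GEU F g' (\<sigma>'(i := (\<sigma>' i)(g' := s'))) i \<le> pmf \<nu> g' * GEU F g' \<sigma>' i"
      by (simp add: mult_left_mono)
    then show "EU ?N (\<sigma>(j := s)) j \<le> EU ?N \<sigma> j"
      unfolding j(1) using EU_dev[OF GP CO j(2,3) s'(1), of s] s'(2) EU_sig[OF GP CO Gi_sub[OF j(3)]] by simp
  qed
qed

end

theorem theorem3p1:
  fixes \<Gamma> :: "('i, 'm) egame" and G :: "('i, 'm) egame set" and Gm :: "('i, 'm) egame"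
    and F :: "('i, 'm) awF" and \<nu> :: "('i, 'm) egame pmf"
  assumes "awareness_game \<Gamma> G Gm F"
    and "set_pmf \<nu> \<subseteq> G"
  shows "std_game (nu_game \<Gamma> G F \<nu>) \<and> perfect_recall (nu_game \<Gamma> G F \<nu>)
       \<and> ((\<forall>g \<in> G. pmf \<nu> g > 0) \<longrightarrow>
            (\<forall>\<sigma> \<sigma>'. gen_profile \<Gamma> G F \<sigma>' \<and> corresponds G F \<sigma> \<sigma>' \<longrightarrow>
               (nash (nu_game \<Gamma> G F \<nu>) \<sigma> \<longleftrightarrow> gen_nash \<Gamma> G F \<sigma>')))"
  using nu_std[OF assms(1,2)] nu_pr[OF assms(1,2)] nash_iff[OF assms(1)] by blast

end
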